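(* Let $B$ be a standard Brownian motion, let $\zeta$ be any subordinator independent of $B$, and let $X$ be the process associated with $B$ and $\zeta$ (defined in the context, with $\kappa=\tfrac12$; no martingale condition imposed on $\zeta$). Then $(\exp(X_t-t/2))_{t\ge0}$ has the same one-dimensional marginal distributions as $(\exp(B_t-t/2))_{t\ge0}$, but it is not a martingale unless $\zeta_t=t$ for all $t$, in which case $X$ has the same law as $B$.
   Context: A subordinator is a process started at $0$ with nonnegative, independent and stationary increments. The process $X$ associated with $B$ and $\zeta$ is the process $(X_t)_{t\ge0}$, $X_0=0$, such that for every $a\in\mathbb{R}$, $(X_t)_{t\ge e^{-a}}$ has the same finite-dimensional distributions as $(t^{1/2}e^{-\zeta_{a+\ln t}/2}B_{e^{\zeta_{a+\ln t}}})_{t\ge e^{-a}}$; equivalently $X$ is the Markov process with $X_0=0$ and transition function $\widetilde P(s,t,x,\mathrm{d}y)=\mathbb{E}[P(Rt,t,(t/s)^{1/2}R^{1/2}x,\mathrm{d}y)]$, $0<s\le t$, where $R=e^{-\zeta_{\ln(t/s)}}$ and $P$ is the Brownian transition function. *)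

theory Defs
  imports "HOL-Probability.Probability"
begin

text \<open>Real-valued processes indexed by time t \<ge> 0 are modelled as functions
  real \<Rightarrow> 'w \<Rightarrow> real; only the values at t \<ge> 0 matter.\<close>

definition same_fdd_on :: "real set \<Rightarrow> 'a measure \<Rightarrow> (real \<Rightarrow> 'a \<Rightarrow> real)
    \<Rightarrow> 'b measure \<Rightarrow> (real \<Rightarrow> 'b \<Rightarrow> real) \<Rightarrow> bool" where
  "same_fdd_on T N X M Y \<longleftrightarrow>
     (\<forall>I. finite I \<and> I \<subseteq> T \<longrightarrow>
        distr N (Pi\<^sub>M I (\<lambda>_. borel)) (\<lambda>\<omega>. restrict (\<lambda>t. X t \<omega>) I)
      = distr M (Pi\<^sub>M I (\<lambda>_. borel)) (\<lambda>\<omega>. restrict (\<lambda>t. Y t \<omega>) I))"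

definition indep_increments :: "'a measure \<Rightarrow> (real \<Rightarrow> 'a \<Rightarrow> real) \<Rightarrow> bool" where
  "indep_increments M Z \<longleftrightarrow>
     (\<forall>ts::real list. sorted_wrt (<) ts \<and> (\<forall>t\<in>set ts. 0 \<le> t) \<longrightarrow>
        prob_space.indep_vars M (\<lambda>_. borel)
          (\<lambda>i \<omega>. Z (ts ! Suc i) \<omega> - Z (ts ! i) \<omega>) {..<length ts - 1})"

definition standard_BM :: "'a measure \<Rightarrow> (real \<Rightarrow> 'a \<Rightarrow> real) \<Rightarrow> bool" where
  "standard_BM M B \<longleftrightarrow> prob_space M \<and>
     (\<forall>t\<ge>0. B t \<in> borel_measurable M) \<and>
     (\<forall>\<omega>\<in>space M. B 0 \<omega> = 0) \<and>
     (\<forall>\<omega>\<in>space M. continuous_on {0..} (\<lambda>t. B t \<omega>)) \<and>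
     (\<forall>s t. 0 \<le> s \<and> s < t \<longrightarrow>
        distributed M lborel (\<lambda>\<omega>. B t \<omega> - B s \<omega>) (normal_density 0 (sqrt (t - s)))) \<and>
     indep_increments M B"

definition subordinator :: "'a measure \<Rightarrow> (real \<Rightarrow> 'a \<Rightarrow> real) \<Rightarrow> bool" where
  "subordinator M Z \<longleftrightarrow> prob_space M \<and>
     (\<forall>t\<ge>0. Z t \<in> borel_measurable M) \<and>
     (\<forall>\<omega>\<in>space M. Z 0 \<omega> = 0) \<and>
     (\<forall>s t. 0 \<le> s \<and> s \<le> t \<longrightarrow> (\<forall>\<omega>\<in>space M. Z s \<omega> \<le> Z t \<omega>)) \<and>
     indep_increments M Z \<and>
     (\<forall>s h. 0 \<le> s \<and> 0 \<le> h \<longrightarrow>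
        distr M borel (\<lambda>\<omega>. Z (s + h) \<omega> - Z s \<omega>) = distr M borel (Z h))"

definition indep_processes :: "'a measure \<Rightarrow> (real \<Rightarrow> 'a \<Rightarrow> real) \<Rightarrow> (real \<Rightarrow> 'a \<Rightarrow> real) \<Rightarrow> bool" where
  "indep_processes M B Z \<longleftrightarrow>
     prob_space.indep_var M
       (Pi\<^sub>M {0..} (\<lambda>_. borel)) (\<lambda>\<omega>. restrict (\<lambda>t. B t \<omega>) {0..})
       (Pi\<^sub>M {0..} (\<lambda>_. borel)) (\<lambda>\<omega>. restrict (\<lambda>t. Z t \<omega>) {0..})"

definition associated_process ::
  "'b measure \<Rightarrow> (real \<Rightarrow> 'b \<Rightarrow> real) \<Rightarrow> 'a measure \<Rightarrow> (real \<Rightarrow> 'a \<Rightarrow> real) \<Rightarrow> (real \<Rightarrow> 'a \<Rightarrow> real) \<Rightarrow> bool" where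
  "associated_process N X M B \<zeta> \<longleftrightarrow> prob_space N \<and>
     (\<forall>t\<ge>0. X t \<in> borel_measurable N) \<and>
     (AE \<omega> in N. X 0 \<omega> = 0) \<and>
     (\<forall>a::real. same_fdd_on {exp (- a)..} N X M
        (\<lambda>t \<omega>. sqrt t * exp (- \<zeta> (a + ln t) \<omega> / 2) * B (exp (\<zeta> (a + ln t) \<omega>)) \<omega>))"

text \<open>Natural filtration of Y at time s, and the martingale property w.r.t. it
  (E[Y_t | F_s] = Y_s written out via the defining property of conditional expectation).\<close>
definition natural_filtration :: "'a measure \<Rightarrow> (real \<Rightarrow> 'a \<Rightarrow> real) \<Rightarrow> real \<Rightarrow> 'a measure" where
  "natural_filtration N Y s =
     sigma (space N) {Y u -` A \<inter> space N | u A. 0 \<le> u \<and> u \<le> s \<and> A \<in> sets borel}"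

definition martingale :: "'a measure \<Rightarrow> (real \<Rightarrow> 'a \<Rightarrow> real) \<Rightarrow> bool" where
  "martingale N Y \<longleftrightarrow>
     (\<forall>t\<ge>0. Y t \<in> borel_measurable N \<and> integrable N (Y t)) \<and>
     (\<forall>s t. 0 \<le> s \<and> s \<le> t \<longrightarrow>
        (\<forall>A\<in>sets (natural_filtration N Y s).
           (\<integral>\<omega>. indicator A \<omega> * Y t \<omega> \<partial>N) = (\<integral>\<omega>. indicator A \<omega> * Y s \<omega> \<partial>N)))"

end

theory Submission
  imports Defs
begin

lemma normal_mgf_pointwise:
  assumes "0 < \<sigma>"
  shows "normal_density 0 \<sigma> x * exp (l * x) = exp (l^2 * \<sigma>^2 / 2) * normal_density (l * \<sigma>^2) \<sigma> x"
proof -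
  have "-(x - 0)\<^sup>2/ (2 * \<sigma>\<^sup>2) + l * x = l^2 * \<sigma>^2 / 2 + (-(x - l * \<sigma>^2)\<^sup>2/ (2 * \<sigma>\<^sup>2))"
    using assms by (simp add: field_simps power2_eq_square)
  then show ?thesis unfolding normal_density_def
    by (simp add: exp_add[symmetric] mult.commute mult.left_commute)
qed

lemma nn_integral_normal_density: "0 < \<sigma> \<Longrightarrow> (\<integral>\<^sup>+x. ennreal (normal_density m \<sigma> x) \<partial>lborel) = 1"
  by (subst nn_integral_eq_integral) (auto simp: integrable_normal_density integral_normal_density)

lemma normal_mgf_nn:
  assumes "0 < \<sigma>"
  shows "(\<integral>\<^sup>+x. ennreal (normal_density 0 \<sigma> x) * ennreal (exp (l * x)) \<partial>lborel) = ennreal (exp (l^2 * \<sigma>^2 / 2))"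
proof -
  have "(\<integral>\<^sup>+x. ennreal (normal_density 0 \<sigma> x) * ennreal (exp (l * x)) \<partial>lborel)
     = (\<integral>\<^sup>+x. ennreal (exp (l^2 * \<sigma>^2 / 2)) * ennreal (normal_density (l * \<sigma>^2) \<sigma> x) \<partial>lborel)"
    by (intro nn_integral_cong) (simp add: ennreal_mult'[symmetric] normal_mgf_pointwise[OF assms])
  also have "\<dots> = ennreal (exp (l^2 * \<sigma>^2 / 2))"
    using assms by (simp add: nn_integral_cmult nn_integral_normal_density)
  finally show ?thesis .
qed

lemma normal_mgf_rv:
  assumes "distributed M lborel X (normal_density 0 \<sigma>)" "0 < \<sigma>"
  shows "(\<integral>\<^sup>+\<omega>. ennreal (exp (l * X \<omega>)) \<partial>M) = ennreal (exp (l^2 * \<sigma>^2 / 2))"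
  using distributed_nn_integral[OF assms(1), of "\<lambda>x. ennreal (exp (l * x))"] normal_mgf_nn[OF assms(2)]
  by simp

definition qn :: "nat \<Rightarrow> real \<Rightarrow> real" where
  "qn n x = real_of_int \<lceil>x * 2^n\<rceil> / 2^n"

lemma qn_ge: "x \<le> qn n x"
proof -
  have "x * 2^n \<le> real_of_int \<lceil>x * 2^n\<rceil>" by linarith
  then show ?thesis unfolding qn_def by (simp add: field_simps)
qed

lemma qn_le: "qn n x \<le> x + 1 / 2^n"
proof -
  have "real_of_int \<lceil>x * 2^n\<rceil> \<le> x * 2^n + 1" by linarith
  then show ?thesis unfolding qn_def by (simp add: field_simps)
qed

lemma qn_tendsto: "(\<lambda>n. qn n x) \<longlonglongrightarrow> x"
proof (rule real_tendsto_sandwich[where f="\<lambda>n. x" and h="\<lambda>n. x + 1 / 2^n"])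
  show "\<forall>\<^sub>F n in sequentially. x \<le> qn n x" by (simp add: qn_ge)
  show "\<forall>\<^sub>F n in sequentially. qn n x \<le> x + 1 / 2^n" by (simp add: qn_le)
  show "(\<lambda>n. x) \<longlonglongrightarrow> x" by simp
  have "(\<lambda>n. (1/2::real)^n) \<longlonglongrightarrow> 0" by (rule LIMSEQ_realpow_zero) auto
  then have "(\<lambda>n. 1 / (2::real)^n) \<longlonglongrightarrow> 0" by (simp add: power_one_over)
  then show "(\<lambda>n. x + 1 / 2^n) \<longlonglongrightarrow> x" using tendsto_add[of "\<lambda>n. x" x sequentially] by fastforce
qed

lemma qn_path_tendsto:
  assumes "continuous_on {0..} f" "0 \<le> x"
  shows "(\<lambda>n. f (qn n x)) \<longlonglongrightarrow> f x"
proof -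
  have "\<forall>n. 0 \<le> qn n x" using assms(2) qn_ge order_trans by blast
  then show ?thesis
    by (intro continuous_on_tendsto_compose[OF assms(1) qn_tendsto]) (auto simp: assms(2))
qed

lemma random_time_measurable:
  fixes B :: "real \<Rightarrow> 'a \<Rightarrow> real"
  assumes Bm: "\<And>t. 0 \<le> t \<Longrightarrow> B t \<in> borel_measurable M"
    and Bc: "\<And>\<omega>. \<omega> \<in> space M \<Longrightarrow> continuous_on {0..} (\<lambda>t. B t \<omega>)"
    and Tm: "T \<in> borel_measurable M" and Tp: "\<And>\<omega>. \<omega> \<in> space M \<Longrightarrow> 0 \<le> T \<omega>"
  shows "(\<lambda>\<omega>. B (T \<omega>) \<omega>) \<in> borel_measurable M"
proof (rule borel_measurable_LIMSEQ_real[where u="\<lambda>n \<omega>. B (qn n (T \<omega>)) \<omega>"])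
  fix \<omega> assume "\<omega> \<in> space M"
  then show "(\<lambda>n. B (qn n (T \<omega>)) \<omega>) \<longlonglongrightarrow> B (T \<omega>) \<omega>"
    using qn_path_tendsto[OF Bc Tp] by auto
next
  fix n
  have "(\<lambda>\<omega>. (\<lambda>i \<omega>. B (max 0 (real_of_int i / 2^n)) \<omega>) (\<lceil>T \<omega> * 2^n\<rceil>) \<omega>) \<in> borel_measurable M"
  proof (rule measurable_compose_countable'[where I=UNIV and f="\<lambda>i \<omega>. B (max 0 (real_of_int i / 2^n)) \<omega>" and g="\<lambda>\<omega>. \<lceil>T \<omega> * 2^n\<rceil>"])
    fix i :: int assume "i \<in> UNIV" show "(\<lambda>\<omega>. B (max 0 (real_of_int i / 2^n)) \<omega>) \<in> borel_measurable M"
      by (rule Bm) simp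
  next
    have "(\<lambda>\<omega>. T \<omega> * 2^n) \<in> borel_measurable M" using Tm by measurable
    then show "(\<lambda>\<omega>. \<lceil>T \<omega> * 2^n\<rceil>) \<in> measurable M (count_space UNIV)"
      by (rule measurable_compose[OF _ measurable_real_ceiling])
  qed simp
  moreover have "\<And>\<omega>. \<omega> \<in> space M \<Longrightarrow> B (max 0 (real_of_int \<lceil>T \<omega> * 2^n\<rceil> / 2^n)) \<omega> = B (qn n (T \<omega>)) \<omega>"
  proof -
    fix \<omega> assume "\<omega> \<in> space M"
    then have "0 \<le> qn n (T \<omega>)" using Tp qn_ge order_trans by blast
    then show "B (max 0 (real_of_int \<lceil>T \<omega> * 2^n\<rceil> / 2^n)) \<omega> = B (qn n (T \<omega>)) \<omega>"
      unfolding qn_def by simp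
  qed
  ultimately show "(\<lambda>\<omega>. B (qn n (T \<omega>)) \<omega>) \<in> borel_measurable M"
    by (subst measurable_cong[symmetric]) auto
qed

lemma F3_measurable:
  fixes F :: "real \<Rightarrow> real \<Rightarrow> real \<Rightarrow> real"
  assumes Fm: "(\<lambda>p. F (fst p) (fst (snd p)) (snd (snd p))) \<in> borel_measurable borel"
    and f: "f \<in> borel_measurable N" and g: "g \<in> borel_measurable N" and h: "h \<in> borel_measurable N"
  shows "(\<lambda>x. F (f x) (g x) (h x)) \<in> borel_measurable N"
proof -
  have "(\<lambda>x. (f x, g x, h x)) \<in> borel_measurable N"
    using f g h by (intro borel_measurable_Pair) auto
  from measurable_compose[OF this Fm] show ?thesis by simp
qed

lemma path_measurable:
  assumes "\<And>t. 0 \<le> t \<Longrightarrow> B t \<in> borel_measurable M"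
  shows "(\<lambda>\<omega>. restrict (\<lambda>t. B t \<omega>) {0..}) \<in> measurable M (Pi\<^sub>M {0..} (\<lambda>_. borel))"
  using assms by (intro measurable_restrict) auto

lemma Lpath_measurable:
  fixes \<tau> :: "real \<Rightarrow> real"
  assumes \<tau>m: "\<tau> \<in> borel_measurable borel" and \<tau>p: "\<And>z. 0 \<le> \<tau> z"
  shows "(\<lambda>p. lim (\<lambda>n. (fst p :: real \<Rightarrow> real) (qn n (\<tau> (snd p))))) \<in> borel_measurable (Pi\<^sub>M {0..} (\<lambda>_. borel) \<Otimes>\<^sub>M (borel :: real measure))"
proof (rule borel_measurable_lim_metric[where f="\<lambda>n p. fst p (qn n (\<tau> (snd p)))"])
  fix n
  let ?P = "Pi\<^sub>M {0::real..} (\<lambda>_. borel :: real measure) \<Otimes>\<^sub>M (borel :: real measure)"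
  have "(\<lambda>p::(real\<Rightarrow>real)\<times>real. (\<lambda>i p. fst p (max 0 (real_of_int i / 2^n))) (\<lceil>\<tau> (snd p) * 2^n\<rceil>) p) \<in> borel_measurable ?P"
  proof (rule measurable_compose_countable'[where I=UNIV and f="\<lambda>i p. fst p (max 0 (real_of_int i / 2^n))" and g="\<lambda>p. \<lceil>\<tau> (snd p) * 2^n\<rceil>"])
    fix i :: int assume "i \<in> UNIV"
    have "(\<lambda>b. b (max 0 (real_of_int i / 2^n))) \<in> borel_measurable (Pi\<^sub>M {0::real..} (\<lambda>_. borel :: real measure))"
      by (rule measurable_component_singleton) simp
    then show "(\<lambda>p. fst p (max 0 (real_of_int i / 2^n))) \<in> borel_measurable ?P"
      by (rule measurable_compose[OF measurable_fst])
  next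
    have "(\<lambda>p. \<tau> (snd p) * 2^n) \<in> borel_measurable ?P"
      by (intro borel_measurable_times measurable_compose[OF measurable_snd \<tau>m]) simp
    then show "(\<lambda>p. \<lceil>\<tau> (snd p) * 2^n\<rceil>) \<in> measurable ?P (count_space UNIV)"
      by (rule measurable_compose[OF _ measurable_real_ceiling])
  qed simp
  moreover have "\<And>p::(real\<Rightarrow>real)\<times>real. fst p (max 0 (real_of_int \<lceil>\<tau> (snd p) * 2^n\<rceil> / 2^n)) = fst p (qn n (\<tau> (snd p)))"
  proof -
    fix p :: "(real \<Rightarrow> real) \<times> real"
    have "0 \<le> qn n (\<tau> (snd p))" using \<tau>p qn_ge order_trans by blast
    then show "fst p (max 0 (real_of_int \<lceil>\<tau> (snd p) * 2^n\<rceil> / 2^n)) = fst p (qn n (\<tau> (snd p)))"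
      unfolding qn_def by simp
  qed
  ultimately show "(\<lambda>p::(real\<Rightarrow>real)\<times>real. fst p (qn n (\<tau> (snd p)))) \<in> borel_measurable ?P"
    by simp
qed

lemma Lpath_eval:
  assumes "continuous_on {0..} (\<lambda>t. B t \<omega>)" "0 \<le> x"
  shows "lim (\<lambda>n. restrict (\<lambda>t. B t \<omega>) {0..} (qn n x)) = B x \<omega>"
proof -
  have "\<And>n. restrict (\<lambda>t. B t \<omega>) {0..} (qn n x) = B (qn n x) \<omega>"
    using assms(2) qn_ge order_trans by (simp, blast)
  then show ?thesis using qn_path_tendsto[OF assms] limI by simp
qed

lemma indep_time_integral:
  fixes B Y :: "real \<Rightarrow> 'a \<Rightarrow> real" and \<tau> :: "real \<Rightarrow> real"
    and F :: "real \<Rightarrow> real \<Rightarrow> real \<Rightarrow> real"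
  assumes M: "prob_space M"
    and Bm: "\<And>t. 0 \<le> t \<Longrightarrow> B t \<in> borel_measurable M"
    and Bc: "\<And>\<omega>. \<omega> \<in> space M \<Longrightarrow> continuous_on {0..} (\<lambda>t. B t \<omega>)"
    and Ym: "\<And>t. 0 \<le> t \<Longrightarrow> Y t \<in> borel_measurable M"
    and ind: "prob_space.indep_var M (Pi\<^sub>M {0..} (\<lambda>_. borel)) (\<lambda>\<omega>. restrict (\<lambda>t. B t \<omega>) {0..})
                 (Pi\<^sub>M {0..} (\<lambda>_. borel)) (\<lambda>\<omega>. restrict (\<lambda>t. Y t \<omega>) {0..})"
    and u: "0 \<le> u"
    and \<tau>m: "\<tau> \<in> borel_measurable borel" and \<tau>p: "\<And>z. 0 \<le> \<tau> z"
    and c: "0 \<le> c"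
    and Fm: "(\<lambda>p. F (fst p) (fst (snd p)) (snd (snd p))) \<in> borel_measurable borel"
  shows "(\<integral>\<^sup>+\<omega>. ennreal (F (B c \<omega>) (B (\<tau> (Y u \<omega>)) \<omega>) (Y u \<omega>)) \<partial>M)
       = (\<integral>\<^sup>+z. (\<integral>\<^sup>+\<omega>. ennreal (F (B c \<omega>) (B (\<tau> z) \<omega>) z) \<partial>M) \<partial>distr M borel (Y u))"
proof -
  interpret prob_space M by (rule M)
  let ?P = "Pi\<^sub>M {0::real..} (\<lambda>_. borel :: real measure)"
  define path where "path \<omega> = restrict (\<lambda>t. B t \<omega>) {0..}" for \<omega>
  define pathY where "pathY \<omega> = restrict (\<lambda>t. Y t \<omega>) {0..}" for \<omega>
  define L where "L p = lim (\<lambda>n. (fst p :: real \<Rightarrow> real) (qn n (\<tau> (snd p))))" for p :: "(real \<Rightarrow> real) \<times> real"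
  define G where "G p = ennreal (F (fst p c) (L (fst p, snd p u)) (snd p u))" for p
  have pathm: "path \<in> measurable M ?P"
    unfolding path_def by (rule path_measurable) (rule Bm)
  have pathYm: "pathY \<in> measurable M ?P"
    unfolding pathY_def by (rule path_measurable) (rule Ym)
  have Lm: "L \<in> borel_measurable (?P \<Otimes>\<^sub>M borel)"
    unfolding L_def by (rule Lpath_measurable[OF \<tau>m \<tau>p])
  have um: "(\<lambda>b. b u) \<in> borel_measurable ?P"
    by (rule measurable_component_singleton) (simp add: u)
  have cm: "(\<lambda>b. b c) \<in> borel_measurable ?P"
    by (rule measurable_component_singleton) (simp add: c)
  have projm: "(\<lambda>p. (fst p, snd p u)) \<in> measurable (?P \<Otimes>\<^sub>M ?P) (?P \<Otimes>\<^sub>M borel)"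
    using um by measurable
  have Gm: "G \<in> borel_measurable (?P \<Otimes>\<^sub>M ?P)"
  proof -
    have "(\<lambda>p. fst p c) \<in> borel_measurable (?P \<Otimes>\<^sub>M ?P)"
      by (rule measurable_compose[OF measurable_fst cm])
    moreover have "(\<lambda>p. snd p u) \<in> borel_measurable (?P \<Otimes>\<^sub>M ?P)"
      by (rule measurable_compose[OF measurable_snd um])
    moreover have "(\<lambda>p. L (fst p, snd p u)) \<in> borel_measurable (?P \<Otimes>\<^sub>M ?P)"
      using measurable_compose[OF projm Lm] by (simp add: comp_def)
    ultimately have "(\<lambda>p. F (fst p c) (L (fst p, snd p u)) (snd p u)) \<in> borel_measurable (?P \<Otimes>\<^sub>M ?P)"
      by (intro F3_measurable[OF Fm])
    then show ?thesis unfolding G_def by simp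
  qed
  have evalL: "L (path \<omega>, z) = B (\<tau> z) \<omega>" if "\<omega> \<in> space M" for \<omega> z
    unfolding L_def path_def using Lpath_eval[of B \<omega> "\<tau> z", OF Bc[OF that] \<tau>p] by simp
  have evalc: "path \<omega> c = B c \<omega>" for \<omega> unfolding path_def using c by simp
  have evalu: "pathY \<omega> u = Y u \<omega>" for \<omega> unfolding pathY_def using u by simp
  define h where "h z = (\<integral>\<^sup>+\<omega>. ennreal (F (B c \<omega>) (B (\<tau> z) \<omega>) z) \<partial>M)" for z
  have hm: "h \<in> borel_measurable borel"
  proof -
    let ?Q = "(borel :: real measure) \<Otimes>\<^sub>M M"
    have "(\<lambda>p. B (\<tau> (fst p)) (snd p)) \<in> borel_measurable ?Q"
    proof (rule random_time_measurable[where B="\<lambda>t p. B t (snd p)" and T="\<lambda>p. \<tau> (fst p)", simplified])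
      fix t :: real assume "0 \<le> t"
      then show "(\<lambda>p. B t (snd p)) \<in> borel_measurable ?Q"
        by (rule measurable_compose[OF measurable_snd Bm])
    next
      fix p assume "p \<in> space ?Q"
      then show "continuous_on {0..} (\<lambda>t. B t (snd p))" using Bc by (auto simp: space_pair_measure)
    next
      show "(\<lambda>p. \<tau> (fst p)) \<in> borel_measurable ?Q"
        by (rule measurable_compose[OF measurable_fst \<tau>m])
    qed (simp add: \<tau>p)
    moreover have "(\<lambda>p. B c (snd p)) \<in> borel_measurable ?Q"
      by (rule measurable_compose[OF measurable_snd Bm[OF c]])
    ultimately have "(\<lambda>p. F (B c (snd p)) (B (\<tau> (fst p)) (snd p)) (fst p)) \<in> borel_measurable ?Q"
      by (intro F3_measurable[OF Fm] measurable_fst)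
    then have "(\<lambda>p. ennreal (F (B c (snd p)) (B (\<tau> (fst p)) (snd p)) (fst p))) \<in> borel_measurable ?Q"
      by measurable
    from borel_measurable_nn_integral_fst[OF this] show ?thesis
      unfolding h_def by simp
  qed
  have pair: "distr M (?P \<Otimes>\<^sub>M ?P) (\<lambda>\<omega>. (path \<omega>, pathY \<omega>)) = distr M ?P path \<Otimes>\<^sub>M distr M ?P pathY"
    using ind unfolding indep_var_distribution_eq path_def pathY_def by simp
  interpret PB: prob_space "distr M ?P path" by (rule prob_space_distr[OF pathm])
  interpret PZ: prob_space "distr M ?P pathY" by (rule prob_space_distr[OF pathYm])
  interpret PP: pair_sigma_finite "distr M ?P path" "distr M ?P pathY" ..
  have "(\<integral>\<^sup>+\<omega>. ennreal (F (B c \<omega>) (B (\<tau> (Y u \<omega>)) \<omega>) (Y u \<omega>)) \<partial>M) = (\<integral>\<^sup>+\<omega>. G (path \<omega>, pathY \<omega>) \<partial>M)"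
    by (intro nn_integral_cong) (simp add: G_def evalL evalc evalu)
  also have "\<dots> = (\<integral>\<^sup>+p. G p \<partial>distr M (?P \<Otimes>\<^sub>M ?P) (\<lambda>\<omega>. (path \<omega>, pathY \<omega>)))"
    by (rule nn_integral_distr[symmetric]) (use pathm pathYm Gm in auto)
  also have "\<dots> = (\<integral>\<^sup>+p. G p \<partial>(distr M ?P path \<Otimes>\<^sub>M distr M ?P pathY))"
    by (simp add: pair)
  also have "\<dots> = (\<integral>\<^sup>+zp. (\<integral>\<^sup>+b. G (b, zp) \<partial>distr M ?P path) \<partial>distr M ?P pathY)"
    by (rule PP.nn_integral_snd[symmetric]) (use Gm in simp)
  also have "\<dots> = (\<integral>\<^sup>+zp. (\<lambda>z. \<integral>\<^sup>+\<omega>. ennreal (F (B c \<omega>) (B (\<tau> z) \<omega>) z) \<partial>M) (zp u) \<partial>distr M ?P pathY)"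
  proof (intro nn_integral_cong)
    fix zp :: "real \<Rightarrow> real"
    assume "zp \<in> space (distr M ?P pathY)"
    then have zp: "zp \<in> space ?P" by simp
    have Gz: "(\<lambda>b. G (b, zp)) \<in> borel_measurable ?P"
      using Gm zp by measurable
    have "(\<integral>\<^sup>+b. G (b, zp) \<partial>distr M ?P path) = (\<integral>\<^sup>+\<omega>. G (path \<omega>, zp) \<partial>M)"
      by (rule nn_integral_distr[OF pathm]) (use Gz in simp)
    also have "\<dots> = (\<integral>\<^sup>+\<omega>. ennreal (F (B c \<omega>) (B (\<tau> (zp u)) \<omega>) (zp u)) \<partial>M)"
      by (intro nn_integral_cong) (simp add: G_def evalL evalc)
    finally show "(\<integral>\<^sup>+b. G (b, zp) \<partial>distr M ?P path) = (\<lambda>z. \<integral>\<^sup>+\<omega>. ennreal (F (B c \<omega>) (B (\<tau> z) \<omega>) z) \<partial>M) (zp u)"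
      by simp
  qed
  also have "\<dots> = (\<integral>\<^sup>+\<omega>. (\<lambda>z. \<integral>\<^sup>+\<omega>. ennreal (F (B c \<omega>) (B (\<tau> z) \<omega>) z) \<partial>M) (pathY \<omega> u) \<partial>M)"
  proof (rule nn_integral_distr[OF pathYm])
    show "(\<lambda>zp. (\<lambda>z. \<integral>\<^sup>+\<omega>. ennreal (F (B c \<omega>) (B (\<tau> z) \<omega>) z) \<partial>M) (zp u)) \<in> borel_measurable (distr M ?P pathY)"
      using measurable_compose[OF um hm] unfolding h_def comp_def by simp
  qed
  also have "\<dots> = (\<integral>\<^sup>+\<omega>. (\<lambda>z. \<integral>\<^sup>+\<omega>. ennreal (F (B c \<omega>) (B (\<tau> z) \<omega>) z) \<partial>M) (Y u \<omega>) \<partial>M)"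
    by (simp add: evalu)
  also have "\<dots> = (\<integral>\<^sup>+z. (\<integral>\<^sup>+\<omega>. ennreal (F (B c \<omega>) (B (\<tau> z) \<omega>) z) \<partial>M) \<partial>distr M borel (Y u))"
    using nn_integral_distr[OF Ym[OF u], of h] hm unfolding h_def by simp
  finally show ?thesis .
qed

lemma distributed_cong_space:
  assumes "\<And>\<omega>. \<omega> \<in> space M \<Longrightarrow> X \<omega> = Y \<omega>" "distributed M N X f"
  shows "distributed M N Y f"
proof -
  have "distr M N X = distr M N Y" by (rule distr_cong) (auto simp: assms(1))
  moreover have "X \<in> measurable M N \<longleftrightarrow> Y \<in> measurable M N" by (rule measurable_cong) (simp add: assms(1))
  ultimately show ?thesis using assms(2) unfolding distributed_def by simp
qed

lemma BM_incr_distributed: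
  assumes "standard_BM M B" "0 \<le> s" "s < t"
  shows "distributed M lborel (\<lambda>\<omega>. B t \<omega> - B s \<omega>) (normal_density 0 (sqrt (t - s)))"
  using assms unfolding standard_BM_def by auto

lemma BM_distributed:
  assumes "standard_BM M B" "0 < t"
  shows "distributed M lborel (B t) (normal_density 0 (sqrt t))"
proof -
  have d: "distributed M lborel (\<lambda>\<omega>. B t \<omega> - B 0 \<omega>) (normal_density 0 (sqrt t))"
    using BM_incr_distributed[OF assms(1), of 0 t] assms(2) by simp
  have e: "\<And>\<omega>. \<omega> \<in> space M \<Longrightarrow> B t \<omega> - B 0 \<omega> = B t \<omega>"
    using assms(1) unfolding standard_BM_def by auto
  show ?thesis by (rule distributed_cong_space[OF e d])
qed

lemma BM_incr_mgf:
  assumes "standard_BM M B" "0 \<le> s" "s < t"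
  shows "(\<integral>\<^sup>+\<omega>. ennreal (exp (l * (B t \<omega> - B s \<omega>))) \<partial>M) = ennreal (exp (l^2 * (t - s) / 2))"
  using normal_mgf_rv[OF BM_incr_distributed[OF assms], of l] assms(3) by simp

lemma BM_mgf:
  assumes "standard_BM M B" "0 < t"
  shows "(\<integral>\<^sup>+\<omega>. ennreal (exp (l * B t \<omega>)) \<partial>M) = ennreal (exp (l^2 * t / 2))"
  using normal_mgf_rv[OF BM_distributed[OF assms], of l] assms(2) by simp

lemma BM_mgf2:
  assumes BM: "standard_BM M B" and z: "0 \<le> z"
  shows "(\<integral>\<^sup>+\<omega>. ennreal (exp (\<alpha> * B 1 \<omega> + \<beta> * B (exp z) \<omega>)) \<partial>M)
       = ennreal (exp ((\<alpha> + \<beta>)^2 / 2 + \<beta>^2 * (exp z - 1) / 2))"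
proof (cases "z = 0")
  case True
  then show ?thesis
    using BM_mgf[OF BM, of 1 "\<alpha> + \<beta>"] by (simp add: distrib_right)
next
  case False
  then have z1: "1 < exp z" using z by simp
  interpret prob_space M using BM unfolding standard_BM_def by auto
  define ts where "ts = [0, 1, exp z]"
  have sorted: "sorted_wrt (<) ts" "\<forall>t\<in>set ts. 0 \<le> t" using z1 unfolding ts_def by auto
  have "indep_vars (\<lambda>_. borel) (\<lambda>i \<omega>. B (ts ! Suc i) \<omega> - B (ts ! i) \<omega>) {..<length ts - 1}"
    using BM sorted unfolding standard_BM_def indep_increments_def by blast
  then have ind: "indep_vars (\<lambda>_. borel) (\<lambda>i \<omega>. B (ts ! Suc i) \<omega> - B (ts ! i) \<omega>) {0, 1}"
    by (rule indep_vars_subset) (auto simp: ts_def)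
  define g where "g i x = ennreal (exp ((if i = (0::nat) then \<alpha> + \<beta> else \<beta>) * x))" for i x
  have ind2: "indep_vars (\<lambda>_. borel) (\<lambda>i \<omega>. g i (B (ts ! Suc i) \<omega> - B (ts ! i) \<omega>)) {0, 1}"
    by (rule indep_vars_compose2[OF ind]) (simp add: g_def)
  have B0: "\<And>\<omega>. \<omega> \<in> space M \<Longrightarrow> B 0 \<omega> = 0" using BM unfolding standard_BM_def by auto
  have "(\<integral>\<^sup>+\<omega>. ennreal (exp (\<alpha> * B 1 \<omega> + \<beta> * B (exp z) \<omega>)) \<partial>M)
      = (\<integral>\<^sup>+\<omega>. (\<Prod>i\<in>{0, 1}. g i (B (ts ! Suc i) \<omega> - B (ts ! i) \<omega>)) \<partial>M)"
  proof (intro nn_integral_cong)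
    fix \<omega> assume "\<omega> \<in> space M"
    then have "B 0 \<omega> = 0" by (rule B0)
    then have "\<alpha> * B 1 \<omega> + \<beta> * B (exp z) \<omega> = (\<alpha> + \<beta>) * (B 1 \<omega> - B 0 \<omega>) + \<beta> * (B (exp z) \<omega> - B 1 \<omega>)"
      by (simp add: algebra_simps)
    then have "exp (\<alpha> * B 1 \<omega> + \<beta> * B (exp z) \<omega>) = exp ((\<alpha> + \<beta>) * (B 1 \<omega> - B 0 \<omega>)) * exp (\<beta> * (B (exp z) \<omega> - B 1 \<omega>))"
      by (simp only: exp_add)
    then show "ennreal (exp (\<alpha> * B 1 \<omega> + \<beta> * B (exp z) \<omega>)) = (\<Prod>i\<in>{0, 1}. g i (B (ts ! Suc i) \<omega> - B (ts ! i) \<omega>))"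
      by (simp add: g_def ts_def ennreal_mult'[symmetric])
  qed
  also have "\<dots> = (\<Prod>i\<in>{0, 1}. \<integral>\<^sup>+\<omega>. g i (B (ts ! Suc i) \<omega> - B (ts ! i) \<omega>) \<partial>M)"
    by (rule indep_vars_nn_integral[OF _ ind2]) simp_all
  also have "\<dots> = ennreal (exp ((\<alpha> + \<beta>)^2 * (1 - 0) / 2)) * ennreal (exp (\<beta>^2 * (exp z - 1) / 2))"
    using BM_incr_mgf[OF BM, of 0 1 "\<alpha> + \<beta>"] BM_incr_mgf[OF BM, of 1 "exp z" \<beta>] z1
    by (simp add: g_def ts_def)
  also have "\<dots> = ennreal (exp ((\<alpha> + \<beta>)^2 / 2 + \<beta>^2 * (exp z - 1) / 2))"
    by (simp add: ennreal_mult'[symmetric] exp_add)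
  finally show ?thesis .
qed

lemma g2_measurable:
  fixes g :: "real \<Rightarrow> real \<Rightarrow> ennreal"
  assumes g: "(\<lambda>p. g (fst p) (snd p)) \<in> borel_measurable borel"
    and f1: "f1 \<in> borel_measurable K" and f2: "f2 \<in> borel_measurable K"
  shows "(\<lambda>x. g (f1 x) (f2 x)) \<in> borel_measurable K"
proof -
  have "(\<lambda>x. (f1 x, f2 x)) \<in> borel_measurable K"
    using f1 f2 by (intro borel_measurable_Pair) auto
  from measurable_compose[OF this g] show ?thesis by simp
qed

lemma fdd_pair:
  fixes g :: "real \<Rightarrow> real \<Rightarrow> ennreal"
  assumes fdd: "same_fdd_on T N X M Y" and st: "s \<in> T" "t \<in> T"
    and Xm: "X s \<in> borel_measurable N" "X t \<in> borel_measurable N"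
    and Ym: "Y s \<in> borel_measurable M" "Y t \<in> borel_measurable M"
    and g: "(\<lambda>p. g (fst p) (snd p)) \<in> borel_measurable borel"
  shows "(\<integral>\<^sup>+\<omega>. g (X s \<omega>) (X t \<omega>) \<partial>N) = (\<integral>\<^sup>+\<omega>. g (Y s \<omega>) (Y t \<omega>) \<partial>M)"
proof -
  define I where "I = {s, t}"
  let ?P = "Pi\<^sub>M I (\<lambda>_. borel :: real measure)"
  have eq: "distr N ?P (\<lambda>\<omega>. restrict (\<lambda>r. X r \<omega>) I) = distr M ?P (\<lambda>\<omega>. restrict (\<lambda>r. Y r \<omega>) I)"
    using fdd st unfolding same_fdd_on_def I_def by auto
  have XIm: "(\<lambda>\<omega>. restrict (\<lambda>r. X r \<omega>) I) \<in> measurable N ?P"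
    by (rule measurable_restrict) (use Xm in \<open>auto simp: I_def\<close>)
  have YIm: "(\<lambda>\<omega>. restrict (\<lambda>r. Y r \<omega>) I) \<in> measurable M ?P"
    by (rule measurable_restrict) (use Ym in \<open>auto simp: I_def\<close>)
  have sm: "(\<lambda>f. f s) \<in> borel_measurable ?P" by (rule measurable_component_singleton) (simp add: I_def)
  have tm: "(\<lambda>f. f t) \<in> borel_measurable ?P" by (rule measurable_component_singleton) (simp add: I_def)
  have \<Phi>m: "(\<lambda>f. g (f s) (f t)) \<in> borel_measurable ?P"
    by (rule g2_measurable[OF g sm tm])
  have "(\<integral>\<^sup>+\<omega>. g (X s \<omega>) (X t \<omega>) \<partial>N) = (\<integral>\<^sup>+\<omega>. (\<lambda>f. g (f s) (f t)) (restrict (\<lambda>r. X r \<omega>) I) \<partial>N)"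
    by (simp add: I_def)
  also have "\<dots> = (\<integral>\<^sup>+f. g (f s) (f t) \<partial>distr N ?P (\<lambda>\<omega>. restrict (\<lambda>r. X r \<omega>) I))"
    by (rule nn_integral_distr[symmetric, OF XIm]) (use \<Phi>m in simp)
  also have "\<dots> = (\<integral>\<^sup>+f. g (f s) (f t) \<partial>distr M ?P (\<lambda>\<omega>. restrict (\<lambda>r. Y r \<omega>) I))"
    by (simp only: eq)
  also have "\<dots> = (\<integral>\<^sup>+\<omega>. (\<lambda>f. g (f s) (f t)) (restrict (\<lambda>r. Y r \<omega>) I) \<partial>M)"
    by (rule nn_integral_distr[OF YIm]) (use \<Phi>m in simp)
  also have "\<dots> = (\<integral>\<^sup>+\<omega>. g (Y s \<omega>) (Y t \<omega>) \<partial>M)"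
    by (simp add: I_def)
  finally show ?thesis .
qed

lemma mart_moment:
  fixes Y :: "real \<Rightarrow> 'b \<Rightarrow> real" and h :: "real \<Rightarrow> ennreal"
  assumes mart: "martingale N Y" and st: "0 \<le> s" "s \<le> t"
    and pos: "\<And>r \<omega>. 0 \<le> r \<Longrightarrow> \<omega> \<in> space N \<Longrightarrow> 0 \<le> Y r \<omega>"
    and hm: "h \<in> borel_measurable borel"
  shows "(\<integral>\<^sup>+\<omega>. h (Y s \<omega>) * ennreal (Y t \<omega>) \<partial>N) = (\<integral>\<^sup>+\<omega>. h (Y s \<omega>) * ennreal (Y s \<omega>) \<partial>N)"
proof -
  have Ysm: "Y s \<in> borel_measurable N" and Ytm: "Y t \<in> borel_measurable N"
    and Ysi: "integrable N (Y s)" and Yti: "integrable N (Y t)"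
    using mart st unfolding martingale_def by auto
  have key: "(\<integral>\<^sup>+\<omega>. ennreal (Y t \<omega>) * indicator (Y s -` C \<inter> space N) \<omega> \<partial>N)
           = (\<integral>\<^sup>+\<omega>. ennreal (Y s \<omega>) * indicator (Y s -` C \<inter> space N) \<omega> \<partial>N)"
    if C: "C \<in> sets borel" for C
  proof -
    let ?A = "Y s -` C \<inter> space N"
    have AN: "?A \<in> sets N" using Ysm C by (rule measurable_sets)
    have "?A \<in> {Y u -` A \<inter> space N | u A. 0 \<le> u \<and> u \<le> s \<and> A \<in> sets borel}"
      using C st by blast
    then have "?A \<in> sets (natural_filtration N Y s)"
      unfolding natural_filtration_def by (subst sets_measure_of) auto
    then have eqI: "(\<integral>\<omega>. indicator ?A \<omega> * Y t \<omega> \<partial>N) = (\<integral>\<omega>. indicator ?A \<omega> * Y s \<omega> \<partial>N)"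
      using mart st unfolding martingale_def by blast
    have conv: "(\<integral>\<^sup>+\<omega>. ennreal (Y r \<omega>) * indicator ?A \<omega> \<partial>N) = ennreal (\<integral>\<omega>. indicator ?A \<omega> * Y r \<omega> \<partial>N)"
      if r: "r \<in> {s, t}" for r
    proof -
      have Yri: "integrable N (Y r)" using r Ysi Yti by auto
      have "integrable N (\<lambda>\<omega>. indicator ?A \<omega> * Y r \<omega>)"
        using integrable_mult_indicator[OF AN Yri] by simp
      then have "ennreal (\<integral>\<omega>. indicator ?A \<omega> * Y r \<omega> \<partial>N) = (\<integral>\<^sup>+\<omega>. ennreal (indicator ?A \<omega> * Y r \<omega>) \<partial>N)"
        by (intro nn_integral_eq_integral[symmetric]) (use r st pos in \<open>auto intro!: AE_I2\<close>)
      also have "\<dots> = (\<integral>\<^sup>+\<omega>. ennreal (Y r \<omega>) * indicator ?A \<omega> \<partial>N)"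
        by (intro nn_integral_cong) (auto simp: indicator_def)
      finally show ?thesis by simp
    qed
    show ?thesis using conv[of s] conv[of t] eqI by simp
  qed
  define \<nu> where "\<nu> r = distr (density N (\<lambda>\<omega>. ennreal (Y r \<omega>))) borel (Y s)" for r
  have \<nu>eq: "\<nu> t = \<nu> s"
  proof (rule measure_eqI)
    show "sets (\<nu> t) = sets (\<nu> s)" by (simp add: \<nu>_def)
  next
    fix C assume "C \<in> sets (\<nu> t)"
    then have C: "C \<in> sets borel" by (simp add: \<nu>_def)
    have "emeasure (\<nu> r) C = (\<integral>\<^sup>+\<omega>. ennreal (Y r \<omega>) * indicator (Y s -` C \<inter> space N) \<omega> \<partial>N)" if "r \<in> {s, t}" for r
    proof -
      have Yrm: "Y r \<in> borel_measurable N" using that Ysm Ytm by auto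
      have "emeasure (\<nu> r) C = emeasure (density N (\<lambda>\<omega>. ennreal (Y r \<omega>))) (Y s -` C \<inter> space N)"
        unfolding \<nu>_def by (subst emeasure_distr) (use Ysm C in auto)
      also have "\<dots> = (\<integral>\<^sup>+\<omega>. ennreal (Y r \<omega>) * indicator (Y s -` C \<inter> space N) \<omega> \<partial>N)"
        by (subst emeasure_density) (use Yrm Ysm C in auto)
      finally show ?thesis .
    qed
    then show "emeasure (\<nu> t) C = emeasure (\<nu> s) C" using key[OF C] by simp
  qed
  have int: "(\<integral>\<^sup>+x. h x \<partial>\<nu> r) = (\<integral>\<^sup>+\<omega>. h (Y s \<omega>) * ennreal (Y r \<omega>) \<partial>N)" if "r \<in> {s, t}" for r
  proof -
    have Yrm: "Y r \<in> borel_measurable N" using that Ysm Ytm by auto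
    have "(\<integral>\<^sup>+x. h x \<partial>\<nu> r) = (\<integral>\<^sup>+\<omega>. h (Y s \<omega>) \<partial>density N (\<lambda>\<omega>. ennreal (Y r \<omega>)))"
      unfolding \<nu>_def by (rule nn_integral_distr) (use Ysm hm in auto)
    also have "\<dots> = (\<integral>\<^sup>+\<omega>. ennreal (Y r \<omega>) * h (Y s \<omega>) \<partial>N)"
      by (rule nn_integral_density) (use Yrm Ysm hm in auto)
    finally show ?thesis by (simp add: mult.commute)
  qed
  show ?thesis using int[of s] int[of t] \<nu>eq by simp
qed

lemma sqrt_exp: "sqrt (exp u) = exp (u / 2)"
proof -
  have "exp (u/2) ^ 2 = exp u" by (simp add: exp_double[symmetric] power2_eq_square exp_add[symmetric])
  then show ?thesis by (metis exp_ge_zero real_sqrt_unique)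
qed

lemma assoc_Y'_measurable:
  assumes BM: "standard_BM M B" and sub: "subordinator M \<zeta>" and lr: "0 \<le> a + ln r"
  shows "(\<lambda>\<omega>. sqrt r * exp (- \<zeta> (a + ln r) \<omega> / 2) * B (exp (\<zeta> (a + ln r) \<omega>)) \<omega>) \<in> borel_measurable M"
proof -
  have Bm: "\<And>t. 0 \<le> t \<Longrightarrow> B t \<in> borel_measurable M" and Bc: "\<And>\<omega>. \<omega> \<in> space M \<Longrightarrow> continuous_on {0..} (\<lambda>t. B t \<omega>)"
    using BM unfolding standard_BM_def by auto
  have zm: "\<zeta> (a + ln r) \<in> borel_measurable M" using sub lr unfolding subordinator_def by auto
  have "(\<lambda>\<omega>. B (exp (\<zeta> (a + ln r) \<omega>)) \<omega>) \<in> borel_measurable M"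
    by (rule random_time_measurable[OF Bm Bc]) (use zm in auto)
  with zm show ?thesis by measurable
qed


lemma inner_comp:
  fixes k :: nat
  assumes BM: "standard_BM M B" and z: "0 \<le> z"
  shows "(\<integral>\<^sup>+\<omega>. ennreal (exp (real k * (B 1 \<omega> - 1/2)) * exp (exp ((u - z) / 2) * B (exp z) \<omega> - exp u/2)) \<partial>M)
       = ennreal (exp (real k * (real k - 1) / 2 + real k * exp ((u - z) / 2)))"
proof -
  define \<beta> where "\<beta> = exp ((u - z) / 2)"
  have \<beta>2: "\<beta>^2 * exp z = exp u"
    by (simp add: \<beta>_def power2_eq_square exp_add[symmetric])
  have "(\<integral>\<^sup>+\<omega>. ennreal (exp (real k * (B 1 \<omega> - 1/2)) * exp (\<beta> * B (exp z) \<omega> - exp u/2)) \<partial>M)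
      = (\<integral>\<^sup>+\<omega>. ennreal (exp (- real k / 2 - exp u / 2)) * ennreal (exp (real k * B 1 \<omega> + \<beta> * B (exp z) \<omega>)) \<partial>M)"
  proof (intro nn_integral_cong)
    fix \<omega>
    have "real k * (B 1 \<omega> - 1/2) + (\<beta> * B (exp z) \<omega> - exp u/2) = (- real k / 2 - exp u / 2) + (real k * B 1 \<omega> + \<beta> * B (exp z) \<omega>)"
      by (simp add: algebra_simps)
    then show "ennreal (exp (real k * (B 1 \<omega> - 1/2)) * exp (\<beta> * B (exp z) \<omega> - exp u/2))
      = ennreal (exp (- real k / 2 - exp u / 2)) * ennreal (exp (real k * B 1 \<omega> + \<beta> * B (exp z) \<omega>))"
      by (simp add: ennreal_mult'[symmetric] exp_add[symmetric])
  qed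
  also have "\<dots> = ennreal (exp (- real k / 2 - exp u / 2)) * ennreal (exp ((real k + \<beta>)^2 / 2 + \<beta>^2 * (exp z - 1) / 2))"
  proof -
    have [measurable]: "B 1 \<in> borel_measurable M" "B (exp z) \<in> borel_measurable M"
      using BM unfolding standard_BM_def by auto
    show ?thesis by (subst nn_integral_cmult) (simp_all add: BM_mgf2[OF BM z])
  qed
  also have "\<dots> = ennreal (exp (real k * (real k - 1) / 2 + real k * \<beta>))"
  proof -
    have e: "\<beta>^2 * (exp z - 1) / 2 = (exp u - \<beta>^2) / 2" using \<beta>2 by (simp add: right_diff_distrib)
    have "(- real k / 2 - exp u / 2) + ((real k + \<beta>)^2 / 2 + \<beta>^2 * (exp z - 1) / 2) = real k * (real k - 1) / 2 + real k * \<beta>"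
      unfolding e by (simp add: power2_eq_square field_simps)
    then show ?thesis by (simp add: ennreal_mult'[symmetric] exp_add[symmetric])
  qed
  finally show ?thesis by (simp add: \<beta>_def)
qed

lemma moment_k:
  fixes k :: nat
  assumes BM: "standard_BM M B" and sub: "subordinator M \<zeta>"
    and ind: "indep_processes M B \<zeta>" and assoc: "associated_process N X M B \<zeta>"
    and mart: "martingale N (\<lambda>t \<omega>. exp (X t \<omega> - t / 2))" and u: "0 < u"
  shows "(\<integral>\<^sup>+\<omega>. ennreal (exp (real k * exp ((u - \<zeta> u \<omega>) / 2))) \<partial>M) = ennreal (exp (real k))"
proof -
  define t where "t = exp u"
  have t1: "1 < t" using u by (simp add: t_def)
  have MP: "prob_space M" and Bm: "\<And>t. 0 \<le> t \<Longrightarrow> B t \<in> borel_measurable M"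
    and B0: "\<And>\<omega>. \<omega> \<in> space M \<Longrightarrow> B 0 \<omega> = 0"
    and Bc: "\<And>\<omega>. \<omega> \<in> space M \<Longrightarrow> continuous_on {0..} (\<lambda>t. B t \<omega>)"
    using BM unfolding standard_BM_def by auto
  have zm: "\<And>t. 0 \<le> t \<Longrightarrow> \<zeta> t \<in> borel_measurable M" and z0: "\<And>\<omega>. \<omega> \<in> space M \<Longrightarrow> \<zeta> 0 \<omega> = 0"
    and zmono: "\<And>s t \<omega>. 0 \<le> s \<Longrightarrow> s \<le> t \<Longrightarrow> \<omega> \<in> space M \<Longrightarrow> \<zeta> s \<omega> \<le> \<zeta> t \<omega>"
    using sub unfolding subordinator_def by auto
  have zpos: "\<And>\<omega>. \<omega> \<in> space M \<Longrightarrow> 0 \<le> \<zeta> u \<omega>"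
    using zmono[of 0 u] z0 u by fastforce
  have NP: "prob_space N" and Xm: "\<And>t. 0 \<le> t \<Longrightarrow> X t \<in> borel_measurable N"
    using assoc unfolding associated_process_def by auto
  define Y' where "Y' r \<omega> = sqrt r * exp (- \<zeta> (0 + ln r) \<omega> / 2) * B (exp (\<zeta> (0 + ln r) \<omega>)) \<omega>" for r \<omega>
  have fdd: "same_fdd_on {exp (- 0)..} N X M Y'"
    using assoc unfolding associated_process_def Y'_def by blast
  have Y'm: "Y' r \<in> borel_measurable M" if "1 \<le> r" for r
    unfolding Y'_def by (rule assoc_Y'_measurable[OF BM sub]) (use that in simp)
  have Y'1: "Y' 1 \<omega> = B 1 \<omega>" if "\<omega> \<in> space M" for \<omega>
    using z0[OF that] by (simp add: Y'_def)
  have Y't: "Y' t \<omega> = exp ((u - \<zeta> u \<omega>) / 2) * B (exp (\<zeta> u \<omega>)) \<omega>" for \<omega>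
    by (simp add: Y'_def t_def sqrt_exp exp_add[symmetric] diff_divide_distrib)
  define Yn where "Yn r \<omega> = exp (X r \<omega> - r / 2)" for r \<omega>
  have mm: "(\<integral>\<^sup>+\<omega>. ennreal (Yn 1 \<omega> ^ k) * ennreal (Yn t \<omega>) \<partial>N) = (\<integral>\<^sup>+\<omega>. ennreal (Yn 1 \<omega> ^ k) * ennreal (Yn 1 \<omega>) \<partial>N)"
    using mart_moment[of N Yn 1 t "\<lambda>y. ennreal (y ^ k)"] mart t1 unfolding Yn_def by simp
  have "(\<integral>\<^sup>+\<omega>. ennreal (Yn 1 \<omega> ^ k) * ennreal (Yn t \<omega>) \<partial>N)
      = (\<integral>\<^sup>+\<omega>. (\<lambda>x y. ennreal (exp (x - 1/2) ^ k) * ennreal (exp (y - t/2))) (X 1 \<omega>) (X t \<omega>) \<partial>N)"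
    by (simp add: Yn_def)
  also have "\<dots> = (\<integral>\<^sup>+\<omega>. (\<lambda>x y. ennreal (exp (x - 1/2) ^ k) * ennreal (exp (y - t/2))) (Y' 1 \<omega>) (Y' t \<omega>) \<partial>M)"
  proof (rule fdd_pair[OF fdd, where g="\<lambda>x y. ennreal (exp (x - 1/2) ^ k) * ennreal (exp (y - t/2))"])
    show "(\<lambda>p. (\<lambda>x y. ennreal (exp (x - 1/2) ^ k) * ennreal (exp (y - t/2))) (fst p) (snd p)) \<in> borel_measurable borel"
      unfolding borel_prod[symmetric] by measurable
  qed (use t1 Xm Y'm in auto)
  also have "\<dots> = (\<integral>\<^sup>+\<omega>. ennreal ((\<lambda>x y z. exp (real k * (x - 1/2)) * exp (exp ((u - z) / 2) * y - t/2))
                         (B 1 \<omega>) (B (exp (\<zeta> u \<omega>)) \<omega>) (\<zeta> u \<omega>)) \<partial>M)"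
    by (intro nn_integral_cong) (simp add: Y'1 Y't ennreal_mult'[symmetric] exp_of_nat_mult)
  also have "\<dots> = (\<integral>\<^sup>+z. (\<integral>\<^sup>+\<omega>. ennreal ((\<lambda>x y z. exp (real k * (x - 1/2)) * exp (exp ((u - z) / 2) * y - t/2))
                         (B 1 \<omega>) (B (exp z) \<omega>) z) \<partial>M) \<partial>distr M borel (\<zeta> u))"
  proof (rule indep_time_integral[OF MP Bm Bc zm])
    show "(\<lambda>p. (\<lambda>x y z. exp (real k * (x - 1/2)) * exp (exp ((u - z) / 2) * y - t/2)) (fst p) (fst (snd p)) (snd (snd p))) \<in> borel_measurable borel"
      unfolding borel_prod[symmetric] by measurable
  qed (use ind u in \<open>auto simp: indep_processes_def\<close>)
  also have "\<dots> = (\<integral>\<^sup>+z. ennreal (exp (real k * (real k - 1) / 2 + real k * exp ((u - z) / 2))) \<partial>distr M borel (\<zeta> u))"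
  proof (rule nn_integral_cong_AE)
    have "AE z in distr M borel (\<zeta> u). 0 \<le> z"
      by (subst AE_distr_iff) (use zm u zpos in \<open>auto intro!: AE_I2\<close>)
    then show "AE z in distr M borel (\<zeta> u). (\<integral>\<^sup>+\<omega>. ennreal ((\<lambda>x y z. exp (real k * (x - 1/2)) * exp (exp ((u - z) / 2) * y - t/2))
                         (B 1 \<omega>) (B (exp z) \<omega>) z) \<partial>M) = ennreal (exp (real k * (real k - 1) / 2 + real k * exp ((u - z) / 2)))"
      by (rule AE_mp) (use inner_comp[OF BM] in \<open>auto simp: t_def intro!: AE_I2\<close>)
  qed
  also have "\<dots> = (\<integral>\<^sup>+\<omega>. ennreal (exp (real k * (real k - 1) / 2)) * ennreal (exp (real k * exp ((u - \<zeta> u \<omega>) / 2))) \<partial>M)"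
    by (subst nn_integral_distr) (use zm u in \<open>auto simp: ennreal_mult'[symmetric] exp_add[symmetric]\<close>)
  also have "\<dots> = ennreal (exp (real k * (real k - 1) / 2)) * (\<integral>\<^sup>+\<omega>. ennreal (exp (real k * exp ((u - \<zeta> u \<omega>) / 2))) \<partial>M)"
  proof (rule nn_integral_cmult)
    have [measurable]: "\<zeta> u \<in> borel_measurable M" using zm u by simp
    show "(\<lambda>\<omega>. ennreal (exp (real k * exp ((u - \<zeta> u \<omega>) / 2)))) \<in> borel_measurable M" by measurable
  qed
  finally have L: "(\<integral>\<^sup>+\<omega>. ennreal (Yn 1 \<omega> ^ k) * ennreal (Yn t \<omega>) \<partial>N) = ennreal (exp (real k * (real k - 1) / 2)) * (\<integral>\<^sup>+\<omega>. ennreal (exp (real k * exp ((u - \<zeta> u \<omega>) / 2))) \<partial>M)" .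
  have "(\<integral>\<^sup>+\<omega>. ennreal (Yn 1 \<omega> ^ k) * ennreal (Yn 1 \<omega>) \<partial>N)
      = (\<integral>\<^sup>+\<omega>. (\<lambda>x y. ennreal (exp (x - 1/2) ^ k) * ennreal (exp (y - 1/2))) (X 1 \<omega>) (X 1 \<omega>) \<partial>N)"
    by (simp add: Yn_def)
  also have "\<dots> = (\<integral>\<^sup>+\<omega>. (\<lambda>x y. ennreal (exp (x - 1/2) ^ k) * ennreal (exp (y - 1/2))) (Y' 1 \<omega>) (Y' 1 \<omega>) \<partial>M)"
  proof (rule fdd_pair[OF fdd, where g="\<lambda>x y. ennreal (exp (x - 1/2) ^ k) * ennreal (exp (y - 1/2))"])
    show "(\<lambda>p. (\<lambda>x y. ennreal (exp (x - 1/2) ^ k) * ennreal (exp (y - 1/2))) (fst p) (snd p)) \<in> borel_measurable borel"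
      unfolding borel_prod[symmetric] by measurable
  qed (use Xm Y'm in auto)
  also have "\<dots> = (\<integral>\<^sup>+\<omega>. ennreal (exp (- (real k + 1) / 2)) * ennreal (exp ((real k + 1) * B 1 \<omega>)) \<partial>M)"
  proof (intro nn_integral_cong)
    fix \<omega> assume "\<omega> \<in> space M"
    have "real k * (B 1 \<omega> - 1/2) + (B 1 \<omega> - 1/2) = - (real k + 1) / 2 + (real k + 1) * B 1 \<omega>"
      by (simp add: field_simps)
    then show "(\<lambda>x y. ennreal (exp (x - 1/2) ^ k) * ennreal (exp (y - 1/2))) (Y' 1 \<omega>) (Y' 1 \<omega>)
       = ennreal (exp (- (real k + 1) / 2)) * ennreal (exp ((real k + 1) * B 1 \<omega>))"
      by (simp add: Y'1[OF \<open>\<omega> \<in> space M\<close>] ennreal_mult'[symmetric] exp_of_nat_mult[symmetric] exp_add[symmetric])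
  qed
  also have "\<dots> = ennreal (exp (- (real k + 1) / 2)) * ennreal (exp ((real k + 1)^2 * 1 / 2))"
  proof -
    have [measurable]: "B 1 \<in> borel_measurable M"
      using BM unfolding standard_BM_def by auto
    show ?thesis by (subst nn_integral_cmult) (simp_all add: BM_mgf[OF BM])
  qed
  also have "\<dots> = ennreal (exp (real k * (real k - 1) / 2)) * ennreal (exp (real k))"
  proof -
    have "- (real k + 1) / 2 + (real k + 1)^2 * 1 / 2 = real k * (real k - 1) / 2 + real k"
      by (simp add: power2_eq_square field_simps)
    then show ?thesis by (simp add: ennreal_mult'[symmetric] exp_add[symmetric])
  qed
  finally have R: "(\<integral>\<^sup>+\<omega>. ennreal (Yn 1 \<omega> ^ k) * ennreal (Yn 1 \<omega>) \<partial>N) = ennreal (exp (real k * (real k - 1) / 2)) * ennreal (exp (real k))" .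
  have "ennreal (exp (real k * (real k - 1) / 2)) * (\<integral>\<^sup>+\<omega>. ennreal (exp (real k * exp ((u - \<zeta> u \<omega>) / 2))) \<partial>M)
      = ennreal (exp (real k * (real k - 1) / 2)) * ennreal (exp (real k))"
    using L R mm by simp
  then show ?thesis
    by (simp add: ennreal_mult_cancel_left)
qed

lemma zeta_det:
  assumes MP: "prob_space M" and zm: "Z \<in> borel_measurable M"
    and m1: "(\<integral>\<^sup>+\<omega>. ennreal (exp (real (1::nat) * exp ((u - Z \<omega>) / 2))) \<partial>M) = ennreal (exp (real (1::nat)))"
    and m2: "(\<integral>\<^sup>+\<omega>. ennreal (exp (real (2::nat) * exp ((u - Z \<omega>) / 2))) \<partial>M) = ennreal (exp (real (2::nat)))"
  shows "AE \<omega> in M. Z \<omega> = u"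
proof -
  interpret prob_space M by (rule MP)
  define W where "W \<omega> = exp ((u - Z \<omega>) / 2)" for \<omega>
  define V where "V \<omega> = exp (W \<omega>)" for \<omega>
  define e where "e = exp (1::real)"
  have [measurable]: "Z \<in> borel_measurable M" by (rule zm)
  have Vm[measurable]: "V \<in> borel_measurable M" unfolding V_def W_def by measurable
  have V1: "(\<integral>\<^sup>+\<omega>. ennreal (V \<omega>) \<partial>M) = ennreal e" using m1 by (simp add: V_def W_def e_def)
  have V2: "(\<integral>\<^sup>+\<omega>. ennreal (V \<omega> ^ 2) \<partial>M) = ennreal (e ^ 2)"
  proof -
    have "\<And>\<omega>. V \<omega> ^ 2 = exp (2 * W \<omega>)" by (simp add: V_def exp_double[symmetric] power2_eq_square exp_add[symmetric])
    moreover have "e ^ 2 = exp 2" by (simp add: e_def power2_eq_square exp_add[symmetric])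
    ultimately show ?thesis using m2 by (simp add: W_def)
  qed
  have pw: "\<And>\<omega>. ennreal ((V \<omega> - e)^2) + ennreal (2 * e * V \<omega>) = ennreal (V \<omega> ^ 2) + ennreal (e ^ 2)"
  proof -
    fix \<omega>
    have "0 \<le> 2 * e * V \<omega>" by (simp add: e_def V_def)
    then have "ennreal ((V \<omega> - e)^2) + ennreal (2 * e * V \<omega>) = ennreal ((V \<omega> - e)^2 + 2 * e * V \<omega>)"
      by (simp add: ennreal_plus)
    also have "(V \<omega> - e)^2 + 2 * e * V \<omega> = V \<omega> ^ 2 + e ^ 2" by (simp add: power2_eq_square algebra_simps)
    also have "ennreal (V \<omega> ^ 2 + e ^ 2) = ennreal (V \<omega> ^ 2) + ennreal (e ^ 2)" by (simp add: ennreal_plus)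
    finally show "ennreal ((V \<omega> - e)^2) + ennreal (2 * e * V \<omega>) = ennreal (V \<omega> ^ 2) + ennreal (e ^ 2)" .
  qed
  have "(\<integral>\<^sup>+\<omega>. ennreal ((V \<omega> - e)^2) \<partial>M) + (\<integral>\<^sup>+\<omega>. ennreal (2 * e * V \<omega>) \<partial>M)
      = (\<integral>\<^sup>+\<omega>. ennreal ((V \<omega> - e)^2) + ennreal (2 * e * V \<omega>) \<partial>M)"
    by (rule nn_integral_add[symmetric]) auto
  also have "\<dots> = (\<integral>\<^sup>+\<omega>. ennreal (V \<omega> ^ 2) + ennreal (e ^ 2) \<partial>M)" by (simp add: pw)
  also have "\<dots> = (\<integral>\<^sup>+\<omega>. ennreal (V \<omega> ^ 2) \<partial>M) + (\<integral>\<^sup>+\<omega>. ennreal (e ^ 2) \<partial>M)"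
    by (rule nn_integral_add) auto
  also have "\<dots> = ennreal (e^2) + ennreal (e^2)" by (simp add: V2 emeasure_space_1)
  finally have A: "(\<integral>\<^sup>+\<omega>. ennreal ((V \<omega> - e)^2) \<partial>M) + (\<integral>\<^sup>+\<omega>. ennreal (2 * e * V \<omega>) \<partial>M) = ennreal (e^2) + ennreal (e^2)" .
  have "(\<integral>\<^sup>+\<omega>. ennreal (2 * e * V \<omega>) \<partial>M) = (\<integral>\<^sup>+\<omega>. ennreal (2 * e) * ennreal (V \<omega>) \<partial>M)"
    by (intro nn_integral_cong) (simp add: ennreal_mult'[symmetric] e_def)
  also have "\<dots> = ennreal (2 * e) * ennreal e" by (simp add: nn_integral_cmult V1)
  also have "\<dots> = ennreal (e^2) + ennreal (e^2)"
    by (simp add: ennreal_mult'[symmetric] ennreal_plus[symmetric] e_def power2_eq_square del: ennreal_plus)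
  finally have B: "(\<integral>\<^sup>+\<omega>. ennreal (2 * e * V \<omega>) \<partial>M) = ennreal (e^2) + ennreal (e^2)" .
  from A B have "(\<integral>\<^sup>+\<omega>. ennreal ((V \<omega> - e)^2) \<partial>M) + (ennreal (e^2) + ennreal (e^2)) = 0 + (ennreal (e^2) + ennreal (e^2))"
    by simp
  then have "(\<integral>\<^sup>+\<omega>. ennreal ((V \<omega> - e)^2) \<partial>M) = 0"
    by (subst (asm) add.commute, subst (asm) (2) add.commute, subst (asm) ennreal_add_left_cancel)
       (simp add: ennreal_plus[symmetric] del: ennreal_plus)
  then have "AE \<omega> in M. ennreal ((V \<omega> - e)^2) = 0"
    by (subst (asm) nn_integral_0_iff_AE) auto
  then show ?thesis
  proof (rule eventually_mono)
    fix \<omega> assume "ennreal ((V \<omega> - e)^2) = 0"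
    then have "(V \<omega> - e)^2 \<le> 0" by simp
    then have "(V \<omega> - e)^2 = 0" by (meson antisym zero_le_power2)
    then have "V \<omega> = e" by simp
    then have "W \<omega> = 1" unfolding V_def e_def by simp
    then have "(u - Z \<omega>) / 2 = 0" unfolding W_def by simp
    then show "Z \<omega> = u" by simp
  qed
qed

lemma part2:
  assumes BM: "standard_BM M B" and sub: "subordinator M \<zeta>"
    and ind: "indep_processes M B \<zeta>" and assoc: "associated_process N X M B \<zeta>"
    and mart: "martingale N (\<lambda>t \<omega>. exp (X t \<omega> - t / 2))"
  shows "\<forall>t\<ge>0. AE \<omega> in M. \<zeta> t \<omega> = t"
proof (intro allI impI)
  fix u :: real assume u: "0 \<le> u"
  have MP: "prob_space M" using BM unfolding standard_BM_def by auto
  have zm: "\<zeta> u \<in> borel_measurable M" and z0: "\<And>\<omega>. \<omega> \<in> space M \<Longrightarrow> \<zeta> 0 \<omega> = 0"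
    using sub u unfolding subordinator_def by auto
  show "AE \<omega> in M. \<zeta> u \<omega> = u"
  proof (cases "u = 0")
    case True
    then show ?thesis using z0 by (intro AE_I2) auto
  next
    case False
    then have "0 < u" using u by simp
    show ?thesis
      by (rule zeta_det[OF MP zm moment_k[OF BM sub ind assoc mart \<open>0 < u\<close>] moment_k[OF BM sub ind assoc mart \<open>0 < u\<close>]])
  qed
qed

lemma fdd_single:
  fixes g :: "real \<Rightarrow> real"
  assumes fdd: "same_fdd_on T N X M Y" and s: "s \<in> T"
    and Xm: "X s \<in> borel_measurable N" and Ym: "Y s \<in> borel_measurable M"
    and g: "g \<in> borel_measurable borel"
  shows "distr N borel (\<lambda>\<omega>. g (X s \<omega>)) = distr M borel (\<lambda>\<omega>. g (Y s \<omega>))"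
proof -
  let ?P = "Pi\<^sub>M {s} (\<lambda>_. borel :: real measure)"
  have eq: "distr N ?P (\<lambda>\<omega>. restrict (\<lambda>r. X r \<omega>) {s}) = distr M ?P (\<lambda>\<omega>. restrict (\<lambda>r. Y r \<omega>) {s})"
    using fdd s unfolding same_fdd_on_def by auto
  have XIm: "(\<lambda>\<omega>. restrict (\<lambda>r. X r \<omega>) {s}) \<in> measurable N ?P"
    by (rule measurable_restrict) (use Xm in auto)
  have YIm: "(\<lambda>\<omega>. restrict (\<lambda>r. Y r \<omega>) {s}) \<in> measurable M ?P"
    by (rule measurable_restrict) (use Ym in auto)
  have sm: "(\<lambda>f. f s) \<in> borel_measurable ?P" by (rule measurable_component_singleton) simp
  have \<Phi>m: "(\<lambda>f. g (f s)) \<in> borel_measurable ?P" using measurable_compose[OF sm g] by (simp add: comp_def)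
  have "distr N borel (\<lambda>\<omega>. g (X s \<omega>)) = distr (distr N ?P (\<lambda>\<omega>. restrict (\<lambda>r. X r \<omega>) {s})) borel (\<lambda>f. g (f s))"
    by (subst distr_distr[OF \<Phi>m XIm]) (simp add: comp_def)
  also have "\<dots> = distr (distr M ?P (\<lambda>\<omega>. restrict (\<lambda>r. Y r \<omega>) {s})) borel (\<lambda>f. g (f s))"
    by (simp only: eq)
  also have "\<dots> = distr M borel (\<lambda>\<omega>. g (Y s \<omega>))"
    by (subst distr_distr[OF \<Phi>m YIm]) (simp add: comp_def)
  finally show ?thesis .
qed

lemma distr_eq_of_distributed:
  assumes "distributed M lborel X f" "distributed M lborel Y f"
  shows "distr M borel X = distr M borel Y"
proof -
  have "distr M borel X = distr M lborel X" by (rule distr_cong) auto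
  also have "\<dots> = distr M lborel Y" using assms unfolding distributed_def by simp
  also have "\<dots> = distr M borel Y" by (rule distr_cong) auto
  finally show ?thesis .
qed

lemma part1:
  assumes BM: "standard_BM M B" and sub: "subordinator M \<zeta>" and assoc: "associated_process N X M B \<zeta>"
  shows "\<forall>t\<ge>0. distr N borel (\<lambda>\<omega>. exp (X t \<omega> - t / 2)) = distr M borel (\<lambda>\<omega>. exp (B t \<omega> - t / 2))"
proof (intro allI impI)
  fix t :: real assume t: "0 \<le> t"
  have MP: "prob_space M" and Bm: "\<And>t. 0 \<le> t \<Longrightarrow> B t \<in> borel_measurable M"
    and B0: "\<And>\<omega>. \<omega> \<in> space M \<Longrightarrow> B 0 \<omega> = 0"
    using BM unfolding standard_BM_def by auto
  have z0: "\<And>\<omega>. \<omega> \<in> space M \<Longrightarrow> \<zeta> 0 \<omega> = 0"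
    using sub unfolding subordinator_def by auto
  have NP: "prob_space N" and Xm: "\<And>t. 0 \<le> t \<Longrightarrow> X t \<in> borel_measurable N"
    and X0: "AE \<omega> in N. X 0 \<omega> = 0"
    using assoc unfolding associated_process_def by auto
  show "distr N borel (\<lambda>\<omega>. exp (X t \<omega> - t / 2)) = distr M borel (\<lambda>\<omega>. exp (B t \<omega> - t / 2))"
  proof (cases "t = 0")
    case True
    have "distr N borel (\<lambda>\<omega>. exp (X t \<omega> - t / 2)) = distr N borel (\<lambda>\<omega>. 1)"
      by (rule distr_cong_AE) (use X0 True Xm in auto)
    also have "\<dots> = return borel 1" by (rule prob_space.distr_const[OF NP]) simp
    also have "\<dots> = distr M borel (\<lambda>\<omega>. 1)" by (rule prob_space.distr_const[OF MP, symmetric]) simp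
    also have "\<dots> = distr M borel (\<lambda>\<omega>. exp (B t \<omega> - t / 2))"
      by (rule distr_cong) (use B0 True in auto)
    finally show ?thesis .
  next
    case False
    then have tp: "0 < t" using t by simp
    define Y' where "Y' r \<omega> = sqrt r * exp (- \<zeta> (- ln t + ln r) \<omega> / 2) * B (exp (\<zeta> (- ln t + ln r) \<omega>)) \<omega>" for r \<omega>
    have fdd: "same_fdd_on {exp (- (- ln t))..} N X M Y'"
      using assoc unfolding associated_process_def Y'_def by blast
    have tin: "t \<in> {exp (- (- ln t))..}" using tp by simp
    have Y'm: "Y' t \<in> borel_measurable M"
      unfolding Y'_def by (rule assoc_Y'_measurable[OF BM sub]) simp
    have "distr N borel (\<lambda>\<omega>. exp (X t \<omega> - t / 2)) = distr M borel (\<lambda>\<omega>. exp (Y' t \<omega> - t / 2))"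
      by (rule fdd_single[OF fdd tin Xm[OF t] Y'm, where g="\<lambda>x. exp (x - t/2)"]) simp
    also have "\<dots> = distr M borel (\<lambda>\<omega>. exp (sqrt t * B 1 \<omega> - t / 2))"
      by (rule distr_cong) (use z0 tp in \<open>auto simp: Y'_def\<close>)
    also have "\<dots> = distr M borel (\<lambda>\<omega>. exp (B t \<omega> - t / 2))"
    proof -
      have d1: "distributed M lborel (\<lambda>\<omega>. 0 + sqrt t * B 1 \<omega>) (normal_density (0 + sqrt t * 0) (\<bar>sqrt t\<bar> * 1))"
        by (rule prob_space.normal_density_affine[OF MP]) (use BM_distributed[OF BM, of 1] tp in auto)
      have d1': "distributed M lborel (\<lambda>\<omega>. sqrt t * B 1 \<omega>) (normal_density 0 (sqrt t))"
        using d1 tp by simp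
      have deq: "distr M borel (\<lambda>\<omega>. sqrt t * B 1 \<omega>) = distr M borel (B t)"
        by (rule distr_eq_of_distributed[OF d1' BM_distributed[OF BM tp]])
      have gm: "(\<lambda>x. exp (x - t / 2)) \<in> borel_measurable borel" by measurable
      have m1: "(\<lambda>\<omega>. sqrt t * B 1 \<omega>) \<in> measurable M borel" using Bm[of 1] by measurable
      have m2: "B t \<in> measurable M borel" using Bm[OF t] by simp
      have "distr M borel (\<lambda>\<omega>. exp (sqrt t * B 1 \<omega> - t / 2)) = distr (distr M borel (\<lambda>\<omega>. sqrt t * B 1 \<omega>)) borel (\<lambda>x. exp (x - t / 2))"
        by (subst distr_distr[OF gm m1]) (simp add: comp_def)
      also have "\<dots> = distr (distr M borel (B t)) borel (\<lambda>x. exp (x - t / 2))" by (simp only: deq)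
      also have "\<dots> = distr M borel (\<lambda>\<omega>. exp (B t \<omega> - t / 2))"
        by (subst distr_distr[OF gm m2]) (simp add: comp_def)
      finally show ?thesis .
    qed
    finally show ?thesis .
  qed
qed

definition gauss_proc :: "'a measure \<Rightarrow> (real \<Rightarrow> 'a \<Rightarrow> real) \<Rightarrow> bool" where
  "gauss_proc M U \<longleftrightarrow> prob_space M \<and> (\<forall>t\<ge>0. U t \<in> borel_measurable M) \<and> (\<forall>\<omega>\<in>space M. U 0 \<omega> = 0) \<and>
     (\<forall>s t. 0 \<le> s \<and> s < t \<longrightarrow> distributed M lborel (\<lambda>\<omega>. U t \<omega> - U s \<omega>) (normal_density 0 (sqrt (t - s)))) \<and>
     indep_increments M U"

lemma BM_gauss: "standard_BM M B \<Longrightarrow> gauss_proc M B"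
  unfolding standard_BM_def gauss_proc_def by blast

lemma gauss_incr_distr:
  assumes "gauss_proc M V" "sorted_wrt (<) ts'" "\<forall>t\<in>set ts'. 0 \<le> t" "2 \<le> length ts'"
  shows "distr M (Pi\<^sub>M {..<length ts' - 1} (\<lambda>_. borel)) (\<lambda>\<omega>. \<lambda>i\<in>{..<length ts' - 1}. V (ts' ! Suc i) \<omega> - V (ts' ! i) \<omega>)
       = Pi\<^sub>M {..<length ts' - 1} (\<lambda>i. density lborel (normal_density 0 (sqrt (ts' ! Suc i - ts' ! i))))"
proof -
  have n: "{..<length ts' - 1} \<noteq> {}" using assms(4) by (auto simp: lessThan_empty_iff)
  interpret prob_space M using assms(1) unfolding gauss_proc_def by auto
  have Vm: "\<And>t. 0 \<le> t \<Longrightarrow> V t \<in> borel_measurable M" using assms(1) unfolding gauss_proc_def by auto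
  have lt: "ts' ! i < ts' ! Suc i" "0 \<le> ts' ! i" if "i \<in> {..<length ts' - 1}" for i
    using that assms(2,3) by (auto simp: sorted_wrt_iff_nth_less)
  have ind: "indep_vars (\<lambda>_. borel) (\<lambda>i \<omega>. V (ts' ! Suc i) \<omega> - V (ts' ! i) \<omega>) {..<length ts' - 1}"
    using assms(1,2,3) unfolding gauss_proc_def indep_increments_def by blast
  have rv: "random_variable borel (\<lambda>\<omega>. V (ts' ! Suc i) \<omega> - V (ts' ! i) \<omega>)" if "i \<in> {..<length ts' - 1}" for i
    using Vm lt[OF that] by (intro borel_measurable_diff) auto
  have "distr M (Pi\<^sub>M {..<length ts' - 1} (\<lambda>_. borel)) (\<lambda>\<omega>. \<lambda>i\<in>{..<length ts' - 1}. V (ts' ! Suc i) \<omega> - V (ts' ! i) \<omega>)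
      = Pi\<^sub>M {..<length ts' - 1} (\<lambda>i. distr M borel (\<lambda>\<omega>. V (ts' ! Suc i) \<omega> - V (ts' ! i) \<omega>))"
    using indep_vars_iff_distr_eq_PiM'[OF n rv] ind by simp
  also have "\<dots> = Pi\<^sub>M {..<length ts' - 1} (\<lambda>i. density lborel (normal_density 0 (sqrt (ts' ! Suc i - ts' ! i))))"
  proof (rule PiM_cong)
    fix i assume i: "i \<in> {..<length ts' - 1}"
    have "distributed M lborel (\<lambda>\<omega>. V (ts' ! Suc i) \<omega> - V (ts' ! i) \<omega>) (normal_density 0 (sqrt (ts' ! Suc i - ts' ! i)))"
      using assms(1) lt[OF i] unfolding gauss_proc_def by auto
    then have "distr M lborel (\<lambda>\<omega>. V (ts' ! Suc i) \<omega> - V (ts' ! i) \<omega>) = density lborel (normal_density 0 (sqrt (ts' ! Suc i - ts' ! i)))"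
      unfolding distributed_def by simp
    moreover have "distr M borel (\<lambda>\<omega>. V (ts' ! Suc i) \<omega> - V (ts' ! i) \<omega>) = distr M lborel (\<lambda>\<omega>. V (ts' ! Suc i) \<omega> - V (ts' ! i) \<omega>)"
      by (rule distr_cong) auto
    ultimately show "distr M borel (\<lambda>\<omega>. V (ts' ! Suc i) \<omega> - V (ts' ! i) \<omega>) = density lborel (normal_density 0 (sqrt (ts' ! Suc i - ts' ! i)))"
      by simp
  qed simp
  finally show ?thesis .
qed

lemma gauss_values:
  assumes G: "gauss_proc M V" and ts: "sorted_wrt (<) ts" "\<forall>t\<in>set ts. 0 < t" "ts \<noteq> []"
  defines "n \<equiv> length ts"
  defines "idx \<equiv> \<lambda>r. SOME j. j < n \<and> ts ! j = r"
  defines "\<Phi> \<equiv> \<lambda>d. restrict (\<lambda>r. \<Sum>i<Suc (idx r). (d i :: real)) (set ts)"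
  shows "distr M (Pi\<^sub>M (set ts) (\<lambda>_. borel)) (\<lambda>\<omega>. restrict (\<lambda>r. V r \<omega>) (set ts))
       = distr (Pi\<^sub>M {..<n} (\<lambda>i. density lborel (normal_density 0 (sqrt ((0#ts) ! Suc i - (0#ts) ! i))))) (Pi\<^sub>M (set ts) (\<lambda>_. borel)) \<Phi>"
proof -
  define ts' where "ts' = 0 # ts"
  have ts'1: "sorted_wrt (<) ts'" "\<forall>t\<in>set ts'. 0 \<le> t" "2 \<le> length ts'"
    using ts unfolding ts'_def by (auto simp: less_imp_le) (cases ts, auto)
  have len: "length ts' - 1 = n" unfolding ts'_def n_def by simp
  have Vm: "\<And>t. 0 \<le> t \<Longrightarrow> V t \<in> borel_measurable M" and V0: "\<And>\<omega>. \<omega> \<in> space M \<Longrightarrow> V 0 \<omega> = 0"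
    using G unfolding gauss_proc_def by auto
  define inc where "inc \<omega> = (\<lambda>i\<in>{..<n}. V (ts' ! Suc i) \<omega> - V (ts' ! i) \<omega>)" for \<omega>
  have D: "distr M (Pi\<^sub>M {..<n} (\<lambda>_. borel)) inc
      = Pi\<^sub>M {..<n} (\<lambda>i. density lborel (normal_density 0 (sqrt ((0#ts) ! Suc i - (0#ts) ! i))))"
    using gauss_incr_distr[OF G ts'1] unfolding len inc_def ts'_def by (simp add: n_def)
  have idx: "idx r < n \<and> ts ! idx r = r" if rin: "r \<in> set ts" for r
  proof -
    obtain j where "j < n" "ts ! j = r" using rin unfolding n_def by (auto simp: in_set_conv_nth)
    then show ?thesis unfolding idx_def by (rule someI[where P="\<lambda>j. j < n \<and> ts ! j = r", OF conjI])
  qed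
  have incm: "inc \<in> measurable M (Pi\<^sub>M {..<n} (\<lambda>_. borel))"
    unfolding inc_def
  proof (rule measurable_restrict)
    fix i assume i: "i \<in> {..<n}"
    have "0 \<le> ts' ! i" "0 \<le> ts' ! Suc i" using ts'1 i len by (auto simp: ts'_def nth_Cons' intro: less_imp_le)
    then show "(\<lambda>\<omega>. V (ts' ! Suc i) \<omega> - V (ts' ! i) \<omega>) \<in> borel_measurable M"
      using Vm by (intro borel_measurable_diff) auto
  qed
  have \<Phi>m: "\<Phi> \<in> measurable (Pi\<^sub>M {..<n} (\<lambda>_. borel)) (Pi\<^sub>M (set ts) (\<lambda>_. borel))"
    unfolding \<Phi>_def
  proof (rule measurable_restrict)
    fix r assume r: "r \<in> set ts"
    show "(\<lambda>d. \<Sum>i<Suc (idx r). (d i :: real)) \<in> borel_measurable (Pi\<^sub>M {..<n} (\<lambda>_. borel))"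
    proof (rule borel_measurable_sum)
      fix i assume "i \<in> {..<Suc (idx r)}"
      then have "i \<in> {..<n}" using idx[OF r] by auto
      then show "(\<lambda>d. d i :: real) \<in> borel_measurable (Pi\<^sub>M {..<n} (\<lambda>_. borel))"
        by (rule measurable_component_singleton)
    qed
  qed
  have eval: "restrict (\<lambda>r. V r \<omega>) (set ts) = \<Phi> (inc \<omega>)" if \<omega>: "\<omega> \<in> space M" for \<omega>
  proof
    fix r show "restrict (\<lambda>r. V r \<omega>) (set ts) r = \<Phi> (inc \<omega>) r"
    proof (cases "r \<in> set ts")
      case True
      define j where "j = idx r"
      have j: "j < n" "ts ! j = r" using idx[OF True] unfolding j_def by auto
      have "(\<Sum>i<Suc j. inc \<omega> i) = (\<Sum>i<Suc j. V (ts' ! Suc i) \<omega> - V (ts' ! i) \<omega>)"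
        using j by (intro sum.cong) (auto simp: inc_def)
      also have "\<dots> = V (ts' ! Suc j) \<omega> - V (ts' ! 0) \<omega>"
        by (rule sum_lessThan_telescope[where f="\<lambda>i. V (ts' ! i) \<omega>"])
      also have "\<dots> = V r \<omega>" using j V0[OF \<omega>] by (simp add: ts'_def)
      finally show ?thesis using True by (simp add: \<Phi>_def j_def)
    next
      case False
      then show ?thesis by (simp add: \<Phi>_def)
    qed
  qed
  have "distr M (Pi\<^sub>M (set ts) (\<lambda>_. borel)) (\<lambda>\<omega>. restrict (\<lambda>r. V r \<omega>) (set ts))
      = distr M (Pi\<^sub>M (set ts) (\<lambda>_. borel)) (\<Phi> \<circ> inc)"
    by (rule distr_cong) (auto simp: eval)
  also have "\<dots> = distr (distr M (Pi\<^sub>M {..<n} (\<lambda>_. borel)) inc) (Pi\<^sub>M (set ts) (\<lambda>_. borel)) \<Phi>"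
    by (rule distr_distr[OF \<Phi>m incm, symmetric])
  also have "\<dots> = distr (Pi\<^sub>M {..<n} (\<lambda>i. density lborel (normal_density 0 (sqrt ((0#ts) ! Suc i - (0#ts) ! i))))) (Pi\<^sub>M (set ts) (\<lambda>_. borel)) \<Phi>"
    by (simp only: D)
  finally show ?thesis .
qed

lemma gauss_fdd_list:
  assumes "gauss_proc M U" "gauss_proc M U'" "sorted_wrt (<) ts" "\<forall>t\<in>set ts. 0 < t" "ts \<noteq> []"
  shows "distr M (Pi\<^sub>M (set ts) (\<lambda>_. borel)) (\<lambda>\<omega>. restrict (\<lambda>r. U r \<omega>) (set ts))
       = distr M (Pi\<^sub>M (set ts) (\<lambda>_. borel)) (\<lambda>\<omega>. restrict (\<lambda>r. U' r \<omega>) (set ts))"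
  using gauss_values[OF assms(1,3,4,5)] gauss_values[OF assms(2,3,4,5)] by simp

lemma scaled_gauss:
  assumes G: "gauss_proc M B" and m: "0 < m"
  shows "gauss_proc M (\<lambda>r \<omega>. sqrt m * B (r / m) \<omega>)"
proof -
  have MP: "prob_space M" and Bm: "\<And>t. 0 \<le> t \<Longrightarrow> B t \<in> borel_measurable M"
    and B0: "\<And>\<omega>. \<omega> \<in> space M \<Longrightarrow> B 0 \<omega> = 0"
    and Bd: "\<And>s t. 0 \<le> s \<Longrightarrow> s < t \<Longrightarrow> distributed M lborel (\<lambda>\<omega>. B t \<omega> - B s \<omega>) (normal_density 0 (sqrt (t - s)))"
    and Bi: "indep_increments M B"
    using G unfolding gauss_proc_def by auto
  interpret prob_space M by (rule MP)
  have meas: "\<forall>t\<ge>0. (\<lambda>\<omega>. sqrt m * B (t / m) \<omega>) \<in> borel_measurable M"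
    using Bm m by auto
  have zero: "\<forall>\<omega>\<in>space M. sqrt m * B (0 / m) \<omega> = 0" using B0 by simp
  have incr: "distributed M lborel (\<lambda>\<omega>. sqrt m * B (t / m) \<omega> - sqrt m * B (s / m) \<omega>) (normal_density 0 (sqrt (t - s)))"
    if st: "0 \<le> s" "s < t" for s t
  proof -
    have d: "distributed M lborel (\<lambda>\<omega>. B (t / m) \<omega> - B (s / m) \<omega>) (normal_density 0 (sqrt (t / m - s / m)))"
      by (rule Bd) (use st m in \<open>auto simp: divide_strict_right_mono\<close>)
    have pos: "0 < sqrt (t / m - s / m)" using st m by (simp add: divide_strict_right_mono)
    have d2: "distributed M lborel (\<lambda>\<omega>. 0 + sqrt m * (B (t / m) \<omega> - B (s / m) \<omega>))
        (normal_density (0 + sqrt m * 0) (\<bar>sqrt m\<bar> * sqrt (t / m - s / m)))"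
      by (rule normal_density_affine[OF d pos]) (use m in simp)
    have e: "\<bar>sqrt m\<bar> * sqrt (t / m - s / m) = sqrt (t - s)"
    proof -
      have "\<bar>sqrt m\<bar> * sqrt (t / m - s / m) = sqrt (m * (t / m - s / m))" using m by (simp add: real_sqrt_mult)
      also have "m * (t / m - s / m) = t - s" using m by (simp add: field_simps)
      finally show ?thesis .
    qed
    have d3: "distributed M lborel (\<lambda>\<omega>. 0 + sqrt m * (B (t / m) \<omega> - B (s / m) \<omega>)) (normal_density 0 (sqrt (t - s)))"
      using d2 unfolding e by simp
    show ?thesis by (rule distributed_cong_space[OF _ d3]) (simp add: algebra_simps)
  qed
  have indep: "indep_increments M (\<lambda>r \<omega>. sqrt m * B (r / m) \<omega>)"
    unfolding indep_increments_def
  proof (intro allI impI)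
    fix ts :: "real list" assume ts: "sorted_wrt (<) ts \<and> (\<forall>t\<in>set ts. 0 \<le> t)"
    define ts2 where "ts2 = map (\<lambda>r. r / m) ts"
    have ts2: "sorted_wrt (<) ts2 \<and> (\<forall>t\<in>set ts2. 0 \<le> t)"
      using ts m unfolding ts2_def by (auto simp: sorted_wrt_map divide_strict_right_mono elim!: sorted_wrt_mono_rel[rotated])
    have "indep_vars (\<lambda>_. borel) (\<lambda>i \<omega>. B (ts2 ! Suc i) \<omega> - B (ts2 ! i) \<omega>) {..<length ts2 - 1}"
      using Bi ts2 unfolding indep_increments_def by blast
    then have "indep_vars (\<lambda>_. borel) (\<lambda>i \<omega>. sqrt m * (B (ts2 ! Suc i) \<omega> - B (ts2 ! i) \<omega>)) {..<length ts2 - 1}"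
      by (rule indep_vars_compose2) simp
    then show "indep_vars (\<lambda>_. borel) (\<lambda>i \<omega>. sqrt m * B (ts ! Suc i / m) \<omega> - sqrt m * B (ts ! i / m) \<omega>) {..<length ts - 1}"
      by (rule indep_vars_cong[THEN iffD1, rotated -1]) (auto simp: ts2_def algebra_simps)
  qed
  show ?thesis unfolding gauss_proc_def using MP meas zero incr indep by blast
qed

lemma scale_identity:
  assumes m: "0 < m" and r: "0 < r"
  shows "sqrt r * exp (- (- ln m + ln r) / 2) = sqrt m" and "exp (- ln m + ln r) = r / m"
proof -
  have "exp (- (- ln m + ln r) / 2) = sqrt (exp (- (- ln m + ln r)))"
    using sqrt_exp[of "- (- ln m + ln r)"] by simp
  also have "exp (- (- ln m + ln r)) = m / r" using m r by (simp add: exp_diff)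
  finally have "sqrt r * exp (- (- ln m + ln r) / 2) = sqrt r * sqrt (m / r)" by simp
  also have "\<dots> = sqrt (r * (m / r))" by (simp only: real_sqrt_mult)
  also have "r * (m / r) = m" using r by simp
  finally show "sqrt r * exp (- (- ln m + ln r) / 2) = sqrt m" .
  show "exp (- ln m + ln r) = r / m" using m r by (simp add: exp_diff)
qed

lemma claimA:
  assumes BM: "standard_BM M B" and sub: "subordinator M \<zeta>" and assoc: "associated_process N X M B \<zeta>"
    and det: "\<forall>t\<ge>0. AE \<omega> in M. \<zeta> t \<omega> = t"
    and J: "finite J" "J \<subseteq> {0<..}"
  shows "distr N (Pi\<^sub>M J (\<lambda>_. borel)) (\<lambda>\<omega>. restrict (\<lambda>r. X r \<omega>) J)
       = distr M (Pi\<^sub>M J (\<lambda>_. borel)) (\<lambda>\<omega>. restrict (\<lambda>r. B r \<omega>) J)"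
proof (cases "J = {}")
  case True
  have NP: "prob_space N" using assoc unfolding associated_process_def by auto
  have MP: "prob_space M" using BM unfolding standard_BM_def by auto
  have "distr N (Pi\<^sub>M J (\<lambda>_. borel)) (\<lambda>\<omega>. restrict (\<lambda>r. X r \<omega>) J) = return (Pi\<^sub>M J (\<lambda>_. borel)) (\<lambda>_. undefined)"
    using prob_space.distr_const[OF NP, of "\<lambda>_. undefined" "Pi\<^sub>M J (\<lambda>_. borel :: real measure)"] True by (simp add: restrict_def)
  also have "\<dots> = distr M (Pi\<^sub>M J (\<lambda>_. borel)) (\<lambda>\<omega>. restrict (\<lambda>r. B r \<omega>) J)"
    using prob_space.distr_const[OF MP, of "\<lambda>_. undefined" "Pi\<^sub>M J (\<lambda>_. borel :: real measure)"] True by (simp add: restrict_def)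
  finally show ?thesis .
next
  case False
  obtain ts where ts: "sorted_wrt (<) ts" "set ts = J"
    using ex1_sorted_list_for_set_if_finite[OF J(1)] by blast
  have tsne: "ts \<noteq> []" using ts False by auto
  have tspos: "\<forall>t\<in>set ts. 0 < t" using ts J by auto
  define m where "m = Min J"
  have m: "0 < m" "m \<in> J" using J False Min_in[OF J(1) False] unfolding m_def by auto
  have mle: "\<And>r. r \<in> J \<Longrightarrow> m \<le> r" unfolding m_def using J(1) by simp
  have Jpos: "\<And>r. r \<in> J \<Longrightarrow> 0 < r" using J by auto
  define Y' where "Y' r \<omega> = sqrt r * exp (- \<zeta> (- ln m + ln r) \<omega> / 2) * B (exp (\<zeta> (- ln m + ln r) \<omega>)) \<omega>" for r \<omega>
  have fdd: "same_fdd_on {exp (- (- ln m))..} N X M Y'"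
    using assoc unfolding associated_process_def Y'_def by blast
  have Jsub: "J \<subseteq> {exp (- (- ln m))..}" using m mle by auto
  have lr: "0 \<le> - ln m + ln r" if "r \<in> J" for r
    using mle[OF that] m Jpos[OF that] by simp
  define V where "V r \<omega> = sqrt m * B (r / m) \<omega>" for r \<omega>
  have Bm: "\<And>t. 0 \<le> t \<Longrightarrow> B t \<in> borel_measurable M" using BM unfolding standard_BM_def by auto
  have Y'm: "(\<lambda>\<omega>. restrict (\<lambda>r. Y' r \<omega>) J) \<in> measurable M (Pi\<^sub>M J (\<lambda>_. borel))"
  proof (rule measurable_restrict)
    fix r assume "r \<in> J"
    then show "Y' r \<in> borel_measurable M"
      unfolding Y'_def by (rule assoc_Y'_measurable[OF BM sub lr])
  qed
  have Vm: "(\<lambda>\<omega>. restrict (\<lambda>r. V r \<omega>) J) \<in> measurable M (Pi\<^sub>M J (\<lambda>_. borel))"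
  proof (rule measurable_restrict)
    fix r assume "r \<in> J"
    then have "0 \<le> r / m" using m Jpos by (simp add: less_imp_le)
    then show "V r \<in> borel_measurable M" unfolding V_def using Bm by measurable
  qed
  have AEJ: "AE \<omega> in M. \<forall>r\<in>J. \<zeta> (- ln m + ln r) \<omega> = - ln m + ln r"
    by (rule AE_finite_allI[OF J(1)]) (use det lr in blast)
  have "distr N (Pi\<^sub>M J (\<lambda>_. borel)) (\<lambda>\<omega>. restrict (\<lambda>r. X r \<omega>) J) = distr M (Pi\<^sub>M J (\<lambda>_. borel)) (\<lambda>\<omega>. restrict (\<lambda>r. Y' r \<omega>) J)"
    using fdd Jsub J(1) unfolding same_fdd_on_def by blast
  also have "\<dots> = distr M (Pi\<^sub>M J (\<lambda>_. borel)) (\<lambda>\<omega>. restrict (\<lambda>r. V r \<omega>) J)"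
  proof (rule distr_cong_AE[OF refl refl _ Y'm Vm])
    show "AE \<omega> in M. restrict (\<lambda>r. Y' r \<omega>) J = restrict (\<lambda>r. V r \<omega>) J"
    proof (rule eventually_mono[OF AEJ])
      fix \<omega> assume h: "\<forall>r\<in>J. \<zeta> (- ln m + ln r) \<omega> = - ln m + ln r"
      show "restrict (\<lambda>r. Y' r \<omega>) J = restrict (\<lambda>r. V r \<omega>) J"
      proof (rule restrict_ext)
        fix r assume r: "r \<in> J"
        have "Y' r \<omega> = sqrt r * exp (- (- ln m + ln r) / 2) * B (exp (- ln m + ln r)) \<omega>"
          using h r by (simp add: Y'_def)
        also have "\<dots> = V r \<omega>"
          using scale_identity[OF m(1) Jpos[OF r]] by (simp add: V_def)
        finally show "Y' r \<omega> = V r \<omega>" .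
      qed
    qed
  qed
  also have "\<dots> = distr M (Pi\<^sub>M J (\<lambda>_. borel)) (\<lambda>\<omega>. restrict (\<lambda>r. B r \<omega>) J)"
    using gauss_fdd_list[OF scaled_gauss[OF BM_gauss[OF BM] m(1)] BM_gauss[OF BM] ts(1) tspos tsne]
    unfolding ts(2) V_def by simp
  finally show ?thesis .
qed

lemma part3:
  assumes BM: "standard_BM M B" and sub: "subordinator M \<zeta>" and assoc: "associated_process N X M B \<zeta>"
    and det: "\<forall>t\<ge>0. AE \<omega> in M. \<zeta> t \<omega> = t"
  shows "same_fdd_on {0..} N X M B"
  unfolding same_fdd_on_def
proof (intro allI impI)
  fix I :: "real set" assume I: "finite I \<and> I \<subseteq> {0..}"
  define J where "J = I - {0}"
  have J: "finite J" "J \<subseteq> {0<..}" using I unfolding J_def by auto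
  have A: "distr N (Pi\<^sub>M J (\<lambda>_. borel)) (\<lambda>\<omega>. restrict (\<lambda>r. X r \<omega>) J)
       = distr M (Pi\<^sub>M J (\<lambda>_. borel)) (\<lambda>\<omega>. restrict (\<lambda>r. B r \<omega>) J)"
    by (rule claimA[OF BM sub assoc det J])
  have Xm: "\<And>t. 0 \<le> t \<Longrightarrow> X t \<in> borel_measurable N" and X0: "AE \<omega> in N. X 0 \<omega> = 0"
    using assoc unfolding associated_process_def by auto
  have Bm: "\<And>t. 0 \<le> t \<Longrightarrow> B t \<in> borel_measurable M" and B0: "\<And>\<omega>. \<omega> \<in> space M \<Longrightarrow> B 0 \<omega> = 0"
    using BM unfolding standard_BM_def by auto
  define ext where "ext f = restrict (\<lambda>r. if r = 0 then 0 else f r) I" for f :: "real \<Rightarrow> real"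
  have extm: "ext \<in> measurable (Pi\<^sub>M J (\<lambda>_. borel)) (Pi\<^sub>M I (\<lambda>_. borel))"
    unfolding ext_def
  proof (rule measurable_restrict)
    fix r assume r: "r \<in> I"
    show "(\<lambda>f. if r = 0 then 0 else f r) \<in> borel_measurable (Pi\<^sub>M J (\<lambda>_. borel :: real measure))"
    proof (cases "r = 0")
      case True then show ?thesis by simp
    next
      case False
      then have "r \<in> J" using r unfolding J_def by simp
      then have "(\<lambda>f. f r) \<in> borel_measurable (Pi\<^sub>M J (\<lambda>_. borel :: real measure))"
        by (rule measurable_component_singleton)
      then show ?thesis using False by simp
    qed
  qed
  have XJm: "(\<lambda>\<omega>. restrict (\<lambda>r. X r \<omega>) J) \<in> measurable N (Pi\<^sub>M J (\<lambda>_. borel))"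
    by (rule measurable_restrict) (use Xm J in auto)
  have XIm: "(\<lambda>\<omega>. restrict (\<lambda>r. X r \<omega>) I) \<in> measurable N (Pi\<^sub>M I (\<lambda>_. borel))"
    by (rule measurable_restrict) (use Xm I in auto)
  have BJm: "(\<lambda>\<omega>. restrict (\<lambda>r. B r \<omega>) J) \<in> measurable M (Pi\<^sub>M J (\<lambda>_. borel))"
    by (rule measurable_restrict) (use Bm J in auto)
  have "distr N (Pi\<^sub>M I (\<lambda>_. borel)) (\<lambda>\<omega>. restrict (\<lambda>r. X r \<omega>) I)
      = distr N (Pi\<^sub>M I (\<lambda>_. borel)) (ext \<circ> (\<lambda>\<omega>. restrict (\<lambda>r. X r \<omega>) J))"
  proof (rule distr_cong_AE[OF refl refl _ XIm measurable_comp[OF XJm extm]])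
    show "AE \<omega> in N. restrict (\<lambda>r. X r \<omega>) I = (ext \<circ> (\<lambda>\<omega>. restrict (\<lambda>r. X r \<omega>) J)) \<omega>"
      by (rule eventually_mono[OF X0]) (auto simp: ext_def J_def restrict_def fun_eq_iff)
  qed
  also have "\<dots> = distr (distr N (Pi\<^sub>M J (\<lambda>_. borel)) (\<lambda>\<omega>. restrict (\<lambda>r. X r \<omega>) J)) (Pi\<^sub>M I (\<lambda>_. borel)) ext"
    by (rule distr_distr[OF extm XJm, symmetric])
  also have "\<dots> = distr (distr M (Pi\<^sub>M J (\<lambda>_. borel)) (\<lambda>\<omega>. restrict (\<lambda>r. B r \<omega>) J)) (Pi\<^sub>M I (\<lambda>_. borel)) ext"
    by (simp only: A)
  also have "\<dots> = distr M (Pi\<^sub>M I (\<lambda>_. borel)) (ext \<circ> (\<lambda>\<omega>. restrict (\<lambda>r. B r \<omega>) J))"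
    by (rule distr_distr[OF extm BJm])
  also have "\<dots> = distr M (Pi\<^sub>M I (\<lambda>_. borel)) (\<lambda>\<omega>. restrict (\<lambda>r. B r \<omega>) I)"
    by (rule distr_cong) (auto simp: ext_def J_def restrict_def fun_eq_iff B0)
  finally show "distr N (Pi\<^sub>M I (\<lambda>_. borel)) (\<lambda>\<omega>. restrict (\<lambda>t. X t \<omega>) I)
      = distr M (Pi\<^sub>M I (\<lambda>_. borel)) (\<lambda>\<omega>. restrict (\<lambda>t. B t \<omega>) I)" .
qed

theorem corollary4p9:
  fixes M :: "'a measure" and N :: "'b measure"
    and B \<zeta> :: "real \<Rightarrow> 'a \<Rightarrow> real" and X :: "real \<Rightarrow> 'b \<Rightarrow> real"
  assumes "standard_BM M B"
    and "subordinator M \<zeta>"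
    and "indep_processes M B \<zeta>"
    and "associated_process N X M B \<zeta>"
  shows "(\<forall>t\<ge>0. distr N borel (\<lambda>\<omega>. exp (X t \<omega> - t / 2))
                 = distr M borel (\<lambda>\<omega>. exp (B t \<omega> - t / 2)))
         \<and> (martingale N (\<lambda>t \<omega>. exp (X t \<omega> - t / 2)) \<longrightarrow> (\<forall>t\<ge>0. AE \<omega> in M. \<zeta> t \<omega> = t))
         \<and> ((\<forall>t\<ge>0. AE \<omega> in M. \<zeta> t \<omega> = t) \<longrightarrow> same_fdd_on {0..} N X M B)"
  using part1[OF assms(1,2,4)] part2[OF assms(1-4)] part3[OF assms(1,2,4)] by blast

end
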